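(* Let $m,n\geq 2$. There exists a $\mathrm{M}^0_{\mathbb Z_{mn+1}^*}(m,n;n,m)$ (an $m\times n$ array with no empty cells) if and only if $mn+1$ is odd and $mn+1>5$.
   Context: For an abelian group $\Gamma$ and $\Omega\subseteq\Gamma$, a zero-sum magic partially filled array $\mathrm{M}^0_\Omega(m,n;s,k)$ is an $m\times n$ array, some cells of which may be empty, with entries in $\Omega$ in which every element of $\Omega$ appears exactly once, each row has exactly $s$ and each column exactly $k$ filled cells, and all row and column sums equal $0_\Gamma$. $\mathbb Z_N$ is the cyclic group of order $N$ and $\mathbb Z_N^*=\mathbb Z_N\setminus\{0\}$. *)

theory Defs
  imports Main
begin

text \<open>Elements of the cyclic group Z_N are represented by their canonical
representatives 0..N-1 (natural numbers); addition is taken modulo N.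
A partially filled m x n array is a function A :: nat => nat => nat option,
only the cells (i,j) with i < m, j < n being relevant; None = empty cell.\<close>

definition zero_sum_magic_pfa ::
  "nat \<Rightarrow> nat set \<Rightarrow> nat \<Rightarrow> nat \<Rightarrow> nat \<Rightarrow> nat \<Rightarrow> (nat \<Rightarrow> nat \<Rightarrow> nat option) \<Rightarrow> bool" where
  "zero_sum_magic_pfa N \<Omega> m n s k A \<longleftrightarrow>
     \<Omega> \<subseteq> {0..<N} \<and>
     (\<forall>i<m. \<forall>j<n. \<forall>x. A i j = Some x \<longrightarrow> x \<in> \<Omega>) \<and>
     (\<forall>x\<in>\<Omega>. card {(i, j). i < m \<and> j < n \<and> A i j = Some x} = 1) \<and>
     (\<forall>i<m. card {j. j < n \<and> A i j \<noteq> None} = s) \<and>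
     (\<forall>j<n. card {i. i < m \<and> A i j \<noteq> None} = k) \<and>
     (\<forall>i<m. (\<Sum>j\<in>{j. j < n \<and> A i j \<noteq> None}. the (A i j)) mod N = 0) \<and>
     (\<forall>j<n. (\<Sum>i\<in>{i. i < m \<and> A i j \<noteq> None}. the (A i j)) mod N = 0)"

definition Zstar :: "nat \<Rightarrow> nat set" where
  "Zstar N = {1..<N}"

end

theory Submission
  imports Defs
begin


definition SV :: "nat \<Rightarrow> int set" where
  "SV L = {x. x \<noteq> 0 \<and> - int L \<le> x \<and> x \<le> int L}"

definition isma :: "nat \<Rightarrow> nat \<Rightarrow> (nat \<Rightarrow> nat \<Rightarrow> int) \<Rightarrow> bool" where
  "isma m n B \<longleftrightarrow> even (m*n) \<and> bij_betw (\<lambda>(i,j). B i j) ({..<m} \<times> {..<n}) (SV (m*n div 2))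
     \<and> (\<forall>i<m. (\<Sum>j<n. B i j) = 0) \<and> (\<forall>j<n. (\<Sum>i<m. B i j) = 0)"

definition msma :: "nat \<Rightarrow> nat \<Rightarrow> (nat \<Rightarrow> nat \<Rightarrow> int) \<Rightarrow> bool" where
  "msma m n B \<longleftrightarrow> even (m*n) \<and> bij_betw (\<lambda>(i,j). B i j) ({..<m} \<times> {..<n}) (SV (m*n div 2))
     \<and> (\<forall>i<m. (\<Sum>j<n. B i j) mod (int (m*n) + 1) = 0) \<and> (\<forall>j<n. (\<Sum>i<m. B i j) mod (int (m*n) + 1) = 0)"

definition bal :: "nat \<Rightarrow> nat \<Rightarrow> (nat \<Rightarrow> nat \<Rightarrow> int) \<Rightarrow> bool" where
  "bal m n B \<longleftrightarrow> (\<forall>i<m. (\<Sum>j<n. sgn (B i j)) = 0) \<and> (\<forall>j<n. (\<Sum>i<m. sgn (B i j)) = 0)"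

definition shift :: "nat \<Rightarrow> (nat \<Rightarrow> nat \<Rightarrow> int) \<Rightarrow> nat \<Rightarrow> nat \<Rightarrow> int" where
  "shift L B i j = B i j + sgn (B i j) * int L"

definition hcat :: "nat \<Rightarrow> (nat \<Rightarrow> nat \<Rightarrow> int) \<Rightarrow> (nat \<Rightarrow> nat \<Rightarrow> int) \<Rightarrow> nat \<Rightarrow> nat \<Rightarrow> int" where
  "hcat n1 A B i j = (if j < n1 then A i j else B i (j - n1))"

definition tr :: "(nat \<Rightarrow> nat \<Rightarrow> int) \<Rightarrow> nat \<Rightarrow> nat \<Rightarrow> int" where
  "tr B i j = B j i"

lemma SV_split: "SV L = {-int L..-1} \<union> {1..int L}"
  by (auto simp: SV_def)

lemma finite_SV[simp]: "finite (SV L)"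
  by (simp add: SV_split)

lemma card_SV: "card (SV L) = 2 * L"
proof -
  have "card ({-int L..-1} \<union> {1..int L}) = card {-int L..-1} + card {1..int L}"
    by (rule card_Un_disjoint) auto
  also have "\<dots> = 2 * L" by simp
  finally show ?thesis by (simp add: SV_split)
qed

lemma sgn_shift: "sgn (x + sgn x * int L) = sgn (x::int)"
  by (cases "x > 0"; cases "x < 0") (auto simp: sgn_if)

lemma shift_bij:
  "bij_betw (\<lambda>x. x + sgn x * int L1) (SV L2) (SV (L1 + L2) - SV L1)"
proof -
  have inj: "inj_on (\<lambda>x. x + sgn x * int L1) (SV L2)"
    by (auto simp: inj_on_def SV_def sgn_if split: if_splits)
  have "(\<lambda>x. x + sgn x * int L1) ` SV L2 = SV (L1 + L2) - SV L1"
  proof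
    show "(\<lambda>x. x + sgn x * int L1) ` SV L2 \<subseteq> SV (L1 + L2) - SV L1"
      by (auto simp: SV_def sgn_if split: if_splits)
  next
    show "SV (L1 + L2) - SV L1 \<subseteq> (\<lambda>x. x + sgn x * int L1) ` SV L2"
    proof
      fix y assume y: "y \<in> SV (L1 + L2) - SV L1"
      show "y \<in> (\<lambda>x. x + sgn x * int L1) ` SV L2"
      proof (cases "y > 0")
        case True
        then have "y - int L1 \<in> SV L2" "y = (y - int L1) + sgn (y - int L1) * int L1"
          using y by (auto simp: SV_def sgn_if)
        then show ?thesis by blast
      next
        case False
        then have "y + int L1 \<in> SV L2" "y = (y + int L1) + sgn (y + int L1) * int L1"
          using y by (auto simp: SV_def sgn_if)
        then show ?thesis by blast
      qed
    qed
  qed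
  with inj show ?thesis by (simp add: bij_betw_def)
qed

lemma sum_shift_line:
  "(\<Sum>j\<in>J. shift L B i j) = (\<Sum>j\<in>J. B i j) + int L * (\<Sum>j\<in>J. sgn (B i j))"
  by (simp add: shift_def sum.distrib sum_distrib_left mult.commute)

lemma sum_shift_col:
  "(\<Sum>i\<in>I. shift L B i j) = (\<Sum>i\<in>I. B i j) + int L * (\<Sum>i\<in>I. sgn (B i j))"
  by (simp add: shift_def sum.distrib sum_distrib_left mult.commute)

lemma sum_lessThan_split:
  fixes n1 n2 :: nat
  shows "(\<Sum>j<n1+n2. f j) = (\<Sum>j<n1. f j) + (\<Sum>j<n2. f (j + n1))"
proof -
  have "(\<Sum>j<n1+n2. f j) = (\<Sum>j\<in>{0..<n1}. f j) + (\<Sum>j\<in>{n1..<n1+n2}. f j)"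
    by (simp add: sum.atLeastLessThan_concat lessThan_atLeast0)
  also have "(\<Sum>j\<in>{n1..<n1+n2}. f j) = (\<Sum>j<n2. f (j + n1))"
    using sum.shift_bounds_nat_ivl[of f 0 n1 n2] by (simp add: lessThan_atLeast0 add.commute)
  finally show ?thesis by (simp add: lessThan_atLeast0)
qed

lemma hcat_isma:
  assumes A: "isma m n1 A" and B: "isma m n2 B" and bB: "bal m n2 B"
  shows "isma m (n1+n2) (hcat n1 A (shift (m*n1 div 2) B))"
proof -
  define L1 where "L1 = m*n1 div 2"
  define L2 where "L2 = m*n2 div 2"
  have e1: "even (m*n1)" and e2: "even (m*n2)" using A B by (auto simp: isma_def)
  have ev: "even (m*(n1+n2))" using e1 e2 by (simp add: distrib_left)
  have LL: "m*(n1+n2) div 2 = L1 + L2"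
    using e1 e2 by (auto simp: L1_def L2_def distrib_left elim!: evenE)
  let ?C = "hcat n1 A (shift L1 B)"
  have bA: "bij_betw (\<lambda>(i,j). A i j) ({..<m} \<times> {..<n1}) (SV L1)"
    using A by (simp add: isma_def L1_def)
  have bB0: "bij_betw (\<lambda>(i,j). B i j) ({..<m} \<times> {..<n2}) (SV L2)"
    using B by (simp add: isma_def L2_def)
  have g1: "bij_betw (\<lambda>(i,j). ?C i j) ({..<m} \<times> {..<n1}) (SV L1)"
    using bA by (rule bij_betw_cong[THEN iffD1, rotated]) (auto simp: hcat_def)
  have bg: "bij_betw (\<lambda>(i,j). (i, j - n1)) ({..<m} \<times> {n1..<n1+n2}) ({..<m} \<times> {..<n2})"
    by (rule bij_betw_byWitness[where f'="\<lambda>(i,j). (i, j + n1)"]) (auto simp: image_iff)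
  have b2: "bij_betw ((\<lambda>x. x + sgn x * int L1) \<circ> ((\<lambda>(i,j). B i j) \<circ> (\<lambda>(i,j). (i, j - n1))))
      ({..<m} \<times> {n1..<n1+n2}) (SV (L1 + L2) - SV L1)"
    by (rule bij_betw_trans[OF bij_betw_trans[OF bg bB0] shift_bij])
  have g2: "bij_betw (\<lambda>(i,j). ?C i j) ({..<m} \<times> {n1..<n1+n2}) (SV (L1 + L2) - SV L1)"
    using b2 by (rule bij_betw_cong[THEN iffD1, rotated]) (auto simp: hcat_def shift_def)
  have g: "bij_betw (\<lambda>(i,j). ?C i j) ({..<m} \<times> {..<n1} \<union> {..<m} \<times> {n1..<n1+n2})
      (SV L1 \<union> (SV (L1 + L2) - SV L1))"
    by (rule bij_betw_combine[OF g1 g2]) auto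
  have u1: "{..<m} \<times> {..<n1} \<union> {..<m} \<times> {n1..<n1+n2} = {..<m} \<times> {..<n1+n2}" by auto
  have u2: "SV L1 \<union> (SV (L1 + L2) - SV L1) = SV (L1 + L2)" by (auto simp: SV_def)
  have bij: "bij_betw (\<lambda>(i,j). ?C i j) ({..<m} \<times> {..<n1+n2}) (SV (m*(n1+n2) div 2))"
    using g unfolding u1 u2 LL .
  have rows: "\<forall>i<m. (\<Sum>j<n1+n2. ?C i j) = 0"
  proof (intro allI impI)
    fix i assume i: "i < m"
    have "(\<Sum>j<n1+n2. ?C i j) = (\<Sum>j<n1. A i j) + (\<Sum>j<n2. shift L1 B i j)"
      by (simp add: sum_lessThan_split hcat_def)
    also have "\<dots> = 0" using A B bB i
      by (simp add: sum_shift_line isma_def bal_def)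
    finally show "(\<Sum>j<n1+n2. ?C i j) = 0" .
  qed
  have cols: "\<forall>j<n1+n2. (\<Sum>i<m. ?C i j) = 0"
  proof (intro allI impI)
    fix j assume j: "j < n1+n2"
    show "(\<Sum>i<m. ?C i j) = 0"
    proof (cases "j < n1")
      case True then show ?thesis using A by (simp add: hcat_def isma_def)
    next
      case False
      then have "j - n1 < n2" using j by simp
      then show ?thesis using False B bB
        by (simp add: hcat_def sum_shift_col isma_def bal_def)
    qed
  qed
  show ?thesis using ev bij rows cols by (simp add: isma_def L1_def)
qed

lemma hcat_bal:
  assumes "bal m n1 A" "bal m n2 B"
  shows "bal m (n1+n2) (hcat n1 A (shift L B))"
proof -
  have r: "\<forall>i<m. (\<Sum>j<n1+n2. sgn (hcat n1 A (shift L B) i j)) = 0"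
    using assms unfolding bal_def by (auto simp: sum_lessThan_split hcat_def shift_def sgn_shift)
  have c: "\<forall>j<n1+n2. (\<Sum>i<m. sgn (hcat n1 A (shift L B) i j)) = 0"
  proof (intro allI impI)
    fix j assume j: "j < n1+n2"
    show "(\<Sum>i<m. sgn (hcat n1 A (shift L B) i j)) = 0"
    proof (cases "j < n1")
      case True then show ?thesis using assms by (simp add: hcat_def bal_def)
    next
      case False then show ?thesis using assms j by (simp add: hcat_def bal_def shift_def sgn_shift)
    qed
  qed
  show ?thesis using r c by (simp add: bal_def)
qed

lemma tr_isma:
  assumes "isma m n B" shows "isma n m (tr B)"
proof -
  have b: "bij_betw (\<lambda>(i,j). B i j) ({..<m} \<times> {..<n}) (SV (m*n div 2))"
    using assms by (simp add: isma_def)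
  have s: "bij_betw prod.swap ({..<n} \<times> {..<m}) ({..<m} \<times> {..<n})"
    by (rule bij_betw_byWitness[where f'=prod.swap]) auto
  have "bij_betw ((\<lambda>(i,j). B i j) \<circ> prod.swap) ({..<n} \<times> {..<m}) (SV (m*n div 2))"
    by (rule bij_betw_trans[OF s b])
  then have "bij_betw (\<lambda>(i,j). tr B i j) ({..<n} \<times> {..<m}) (SV (m*n div 2))"
    by (rule bij_betw_cong[THEN iffD1, rotated]) (auto simp: tr_def)
  then have "bij_betw (\<lambda>(i,j). tr B i j) ({..<n} \<times> {..<m}) (SV (n*m div 2))"
    by (simp add: mult.commute)
  then show ?thesis using assms by (auto simp: isma_def tr_def mult.commute)
qed

lemma tr_bal: "bal m n B \<Longrightarrow> bal n m (tr B)"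
  by (auto simp: bal_def tr_def)

lemma tr_msma:
  assumes "msma m n B" shows "msma n m (tr B)"
proof -
  have b: "bij_betw (\<lambda>(i,j). B i j) ({..<m} \<times> {..<n}) (SV (m*n div 2))"
    using assms by (simp add: msma_def)
  have s: "bij_betw prod.swap ({..<n} \<times> {..<m}) ({..<m} \<times> {..<n})"
    by (rule bij_betw_byWitness[where f'=prod.swap]) auto
  have "bij_betw ((\<lambda>(i,j). B i j) \<circ> prod.swap) ({..<n} \<times> {..<m}) (SV (m*n div 2))"
    by (rule bij_betw_trans[OF s b])
  then have "bij_betw (\<lambda>(i,j). tr B i j) ({..<n} \<times> {..<m}) (SV (m*n div 2))"
    by (rule bij_betw_cong[THEN iffD1, rotated]) (auto simp: tr_def)
  then have "bij_betw (\<lambda>(i,j). tr B i j) ({..<n} \<times> {..<m}) (SV (n*m div 2))"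
    by (simp add: mult.commute)
  then show ?thesis using assms by (auto simp: msma_def tr_def mult.commute)
qed

lemma isma_msma: "isma m n B \<Longrightarrow> msma m n B"
  by (simp add: isma_def msma_def)


lemma mod_SV:
  assumes "v \<in> SV L"
  shows "v mod (2 * int L + 1) = (if v > 0 then v else v + 2 * int L + 1)"
proof (cases "v > 0")
  case True then show ?thesis using assms by (auto simp: SV_def intro: mod_pos_pos_trivial)
next
  case False
  have "v mod (2 * int L + 1) = (v + (2 * int L + 1)) mod (2 * int L + 1)" by simp
  also have "\<dots> = v + (2 * int L + 1)"
    using assms False by (intro mod_pos_pos_trivial) (auto simp: SV_def)
  finally show ?thesis using False by simp
qed

lemma modN_bij:
  "bij_betw (\<lambda>v. nat (v mod (2 * int L + 1))) (SV L) {1..<2*L+1}"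
proof -
  have inj: "inj_on (\<lambda>v. nat (v mod (2 * int L + 1))) (SV L)"
  proof (rule inj_onI)
    fix x y assume x: "x \<in> SV L" and y: "y \<in> SV L"
      and e: "nat (x mod (2 * int L + 1)) = nat (y mod (2 * int L + 1))"
    have "x mod (2 * int L + 1) = y mod (2 * int L + 1)"
      using e by (simp add: eq_nat_nat_iff)
    then show "x = y" using x y mod_SV[OF x] mod_SV[OF y]
      by (auto simp: SV_def split: if_splits)
  qed
  have img: "(\<lambda>v. nat (v mod (2 * int L + 1))) ` SV L = {1..<2*L+1}"
  proof
    show "(\<lambda>v. nat (v mod (2 * int L + 1))) ` SV L \<subseteq> {1..<2*L+1}"
    proof
      fix z assume "z \<in> (\<lambda>v. nat (v mod (2 * int L + 1))) ` SV L"
      then obtain v where v: "v \<in> SV L" and z: "z = nat (v mod (2 * int L + 1))" by blast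
      show "z \<in> {1..<2*L+1}" using mod_SV[OF v] v z by (auto simp: SV_def)
    qed
  next
    show "{1..<2*L+1} \<subseteq> (\<lambda>v. nat (v mod (2 * int L + 1))) ` SV L"
    proof
      fix z assume z: "z \<in> {1..<2*L+1}"
      show "z \<in> (\<lambda>v. nat (v mod (2 * int L + 1))) ` SV L"
      proof (cases "z \<le> L")
        case True
        then have "int z \<in> SV L" using z by (auto simp: SV_def)
        moreover have "z = nat (int z mod (2 * int L + 1))"
          using mod_SV[OF \<open>int z \<in> SV L\<close>] z by auto
        ultimately show ?thesis by blast
      next
        case False
        then have w: "int z - (2 * int L + 1) \<in> SV L" using z by (auto simp: SV_def)
        moreover have "z = nat ((int z - (2 * int L + 1)) mod (2 * int L + 1))"
          using mod_SV[OF w] z False by auto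
        ultimately show ?thesis by blast
      qed
    qed
  qed
  show ?thesis using inj img by (simp add: bij_betw_def)
qed

lemma bij_card_fiber:
  assumes "bij_betw h X Y" "y \<in> Y"
  shows "card {x \<in> X. h x = y} = 1"
proof -
  obtain x where x: "x \<in> X" "h x = y" using assms unfolding bij_betw_def by blast
  have "{x \<in> X. h x = y} = {x}"
    using assms(1) x unfolding bij_betw_def inj_on_def by blast
  then show ?thesis by simp
qed

lemma msma_pfa:
  assumes M: "msma m n B"
  shows "\<exists>A. zero_sum_magic_pfa (m*n+1) (Zstar (m*n+1)) m n n m A"
proof -
  define L where "L = m*n div 2"
  have ev: "even (m*n)" using M by (simp add: msma_def)
  have NL: "m*n+1 = 2*L+1" using ev by (auto simp: L_def elim!: evenE)
  have NL2: "m*n = 2*L" using NL by simp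
  have NLi: "int (m*n) + 1 = 2 * int L + 1" using NL by linarith
  define g where "g v = nat (v mod (2 * int L + 1))" for v
  define A where "A i j = Some (g (B i j))" for i j
  have bB: "bij_betw (\<lambda>(i,j). B i j) ({..<m} \<times> {..<n}) (SV L)"
    using M by (simp add: msma_def L_def)
  have bh: "bij_betw (g \<circ> (\<lambda>(i,j). B i j)) ({..<m} \<times> {..<n}) {1..<2*L+1}"
    by (rule bij_betw_trans[OF bB]) (use modN_bij[of L] in \<open>simp add: g_def[abs_def]\<close>)
  have gpos: "g v \<in> {1..<2*L+1}" if "v \<in> SV L" for v
    using modN_bij[of L] that unfolding bij_betw_def g_def by blast
  have Bin: "B i j \<in> SV L" if "i < m" "j < n" for i j
    using bB that unfolding bij_betw_def by auto
  have sumconv: "(\<Sum>j\<in>J. g (f j)) mod (2*L+1) = 0"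
    if "(\<Sum>j\<in>J. f j) mod (2 * int L + 1) = 0" for J and f :: "nat \<Rightarrow> int"
  proof -
    have "int (\<Sum>j\<in>J. g (f j)) = (\<Sum>j\<in>J. f j mod (2 * int L + 1))"
      by (simp add: g_def)
    then have "int (\<Sum>j\<in>J. g (f j)) mod (2 * int L + 1) = (\<Sum>j\<in>J. f j) mod (2 * int L + 1)"
      by (simp add: mod_sum_eq)
    moreover have "int ((\<Sum>j\<in>J. g (f j)) mod (2*L+1)) = int (\<Sum>j\<in>J. g (f j)) mod int (2*L+1)"
      by (rule of_nat_mod)
    moreover have "int (2*L+1) = 2 * int L + 1" by simp
    ultimately have "int ((\<Sum>j\<in>J. g (f j)) mod (2*L+1)) = 0"
      using that by metis
    then show ?thesis by simp
  qed
  have "zero_sum_magic_pfa (m*n+1) (Zstar (m*n+1)) m n n m A"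
    unfolding zero_sum_magic_pfa_def
  proof (intro conjI)
    show "Zstar (m*n+1) \<subseteq> {0..<m*n+1}" by (auto simp: Zstar_def)
    show "\<forall>i<m. \<forall>j<n. \<forall>x. A i j = Some x \<longrightarrow> x \<in> Zstar (m*n+1)"
      using gpos Bin by (force simp: A_def Zstar_def NL2)
    show "\<forall>x\<in>Zstar (m*n+1). card {(i, j). i < m \<and> j < n \<and> A i j = Some x} = 1"
    proof
      fix x assume x: "x \<in> Zstar (m*n+1)"
      have "{(i, j). i < m \<and> j < n \<and> A i j = Some x} = {p \<in> {..<m} \<times> {..<n}. (g \<circ> (\<lambda>(i,j). B i j)) p = x}"
        by (auto simp: A_def)
      moreover have "card {p \<in> {..<m} \<times> {..<n}. (g \<circ> (\<lambda>(i,j). B i j)) p = x} = 1"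
        by (rule bij_card_fiber[OF bh]) (use x in \<open>simp add: Zstar_def NL2\<close>)
      ultimately show "card {(i, j). i < m \<and> j < n \<and> A i j = Some x} = 1" by simp
    qed
    show "\<forall>i<m. card {j. j < n \<and> A i j \<noteq> None} = n" by (simp add: A_def)
    show "\<forall>j<n. card {i. i < m \<and> A i j \<noteq> None} = m" by (simp add: A_def)
    show "\<forall>i<m. (\<Sum>j\<in>{j. j < n \<and> A i j \<noteq> None}. the (A i j)) mod (m*n+1) = 0"
    proof (intro allI impI)
      fix i assume i: "i < m"
      have "(\<Sum>j<n. B i j) mod (2 * int L + 1) = 0" using M i unfolding msma_def NLi by blast
      then have "(\<Sum>j\<in>{..<n}. g (B i j)) mod (2*L+1) = 0" by (rule sumconv)
      moreover have "{j. j < n \<and> A i j \<noteq> None} = {..<n}" by (auto simp: A_def)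
      ultimately show "(\<Sum>j\<in>{j. j < n \<and> A i j \<noteq> None}. the (A i j)) mod (m*n+1) = 0"
        by (simp add: A_def NL2)
    qed
    show "\<forall>j<n. (\<Sum>i\<in>{i. i < m \<and> A i j \<noteq> None}. the (A i j)) mod (m*n+1) = 0"
    proof (intro allI impI)
      fix j assume j: "j < n"
      have "(\<Sum>i<m. B i j) mod (2 * int L + 1) = 0" using M j unfolding msma_def NLi by blast
      then have "(\<Sum>i\<in>{..<m}. g (B i j)) mod (2*L+1) = 0" by (rule sumconv)
      moreover have "{i. i < m \<and> A i j \<noteq> None} = {..<m}" by (auto simp: A_def)
      ultimately show "(\<Sum>i\<in>{i. i < m \<and> A i j \<noteq> None}. the (A i j)) mod (m*n+1) = 0"
        by (simp add: A_def NL2)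
    qed
  qed
  then show ?thesis by blast
qed


lemma two_sum_upto: "2 * (\<Sum>x\<in>{1..<N}. x) = N * (N - 1::nat)"
proof (induction N)
  case 0 then show ?case by simp
next
  case (Suc N)
  then show ?case
  proof (cases N)
    case 0 then show ?thesis by simp
  next
    case (Suc k)
    have "{1..<Suc N} = insert N {1..<N}" using Suc by auto
    then have "(\<Sum>x\<in>{1..<Suc N}. x) = N + (\<Sum>x\<in>{1..<N}. x)" by simp
    then show ?thesis using Suc.IH Suc by (simp add: algebra_simps)
  qed
qed

lemma necessity:
  assumes m: "m \<ge> 2" and n: "n \<ge> 2"
    and P: "zero_sum_magic_pfa (m*n+1) (Zstar (m*n+1)) m n n m A"
  shows "odd (m*n+1) \<and> m*n+1 > 5"
proof -
  define N where "N = m*n+1"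
  have P': "zero_sum_magic_pfa N (Zstar N) m n n m A" using P by (simp add: N_def)
  note PP = P'[unfolded zero_sum_magic_pfa_def]
  have C2: "\<forall>i<m. \<forall>j<n. \<forall>x. A i j = Some x \<longrightarrow> x \<in> Zstar N" using PP by (elim conjE)
  have C3: "\<forall>x\<in>Zstar N. card {(i, j). i < m \<and> j < n \<and> A i j = Some x} = 1" using PP by (elim conjE)
  have C4: "\<forall>i<m. card {j. j < n \<and> A i j \<noteq> None} = n" using PP by (elim conjE)
  have C6: "\<forall>i<m. (\<Sum>j\<in>{j. j < n \<and> A i j \<noteq> None}. the (A i j)) mod N = 0" using PP by (elim conjE)
  have C7: "\<forall>j<n. (\<Sum>i\<in>{i. i < m \<and> A i j \<noteq> None}. the (A i j)) mod N = 0" using PP by (elim conjE)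
  have full: "A i j \<noteq> None" if "i < m" "j < n" for i j
  proof -
    have c: "card {j. j < n \<and> A i j \<noteq> None} = n"
      using C4 that by blast
    have sub: "{j. j < n \<and> A i j \<noteq> None} \<subseteq> {..<n}" by auto
    have "{j. j < n \<and> A i j \<noteq> None} = {..<n}"
      by (rule card_subset_eq) (use c sub in auto)
    then show ?thesis using that by auto
  qed
  define h where "h = (\<lambda>(i,j). the (A i j))"
  have inO: "h (i,j) \<in> {1..<N}" if ij: "i < m" "j < n" for i j
  proof -
    obtain x where "A i j = Some x" using full[OF ij] by auto
    then show ?thesis using C2 ij by (auto simp: h_def Zstar_def)
  qed
  have cnt: "card {(i, j). i < m \<and> j < n \<and> A i j = Some x} = 1" if "x \<in> {1..<N}" for x
    using C3 that by (simp add: Zstar_def)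
  have G: "{(i, j). i < m \<and> j < n \<and> A i j = Some x} = {p \<in> {..<m} \<times> {..<n}. h p = x}" for x
    using full by (auto simp: h_def)
  have bij: "bij_betw h ({..<m} \<times> {..<n}) {1..<N}"
    unfolding bij_betw_def
  proof
    show "inj_on h ({..<m} \<times> {..<n})"
    proof (rule inj_onI)
      fix p q assume p: "p \<in> {..<m} \<times> {..<n}" and q: "q \<in> {..<m} \<times> {..<n}" and e: "h p = h q"
      have x: "h p \<in> {1..<N}" using p inO by auto
      have "card {r \<in> {..<m} \<times> {..<n}. h r = h p} = 1" using cnt[OF x] G by simp
      then obtain r where R: "{r' \<in> {..<m} \<times> {..<n}. h r' = h p} = {r}" by (rule card_1_singletonE)
      have "p \<in> {r' \<in> {..<m} \<times> {..<n}. h r' = h p}" "q \<in> {r' \<in> {..<m} \<times> {..<n}. h r' = h p}"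
        using p q e by auto
      then show "p = q" unfolding R by simp
    qed
    show "h ` ({..<m} \<times> {..<n}) = {1..<N}"
    proof
      show "h ` ({..<m} \<times> {..<n}) \<subseteq> {1..<N}" using inO by auto
      show "{1..<N} \<subseteq> h ` ({..<m} \<times> {..<n})"
      proof
        fix x assume x: "x \<in> {1..<N}"
        have "card {r \<in> {..<m} \<times> {..<n}. h r = x} = 1" using cnt[OF x] G by simp
        then obtain r where R: "{r' \<in> {..<m} \<times> {..<n}. h r' = x} = {r}" by (rule card_1_singletonE)
        then have "r \<in> {r' \<in> {..<m} \<times> {..<n}. h r' = x}" by simp
        then show "x \<in> h ` ({..<m} \<times> {..<n})" by auto
      qed
    qed
  qed
  have rowsum: "(\<Sum>j<n. h (i,j)) mod N = 0" if "i < m" for i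
  proof -
    have e: "{j. j < n \<and> A i j \<noteq> None} = {..<n}" using full that by auto
    have c: "(\<Sum>j\<in>{j. j < n \<and> A i j \<noteq> None}. the (A i j)) mod N = 0" using C6 that by blast
    show ?thesis using c unfolding e h_def by simp
  qed
  have colsum: "(\<Sum>i<m. h (i,j)) mod N = 0" if "j < n" for j
  proof -
    have e: "{i. i < m \<and> A i j \<noteq> None} = {..<m}" using full that by auto
    have c: "(\<Sum>i\<in>{i. i < m \<and> A i j \<noteq> None}. the (A i j)) mod N = 0" using C7 that by blast
    show ?thesis using c unfolding e h_def by simp
  qed
  have tot: "(\<Sum>p\<in>{..<m} \<times> {..<n}. h p) = (\<Sum>x\<in>{1..<N}. x)"
    using sum.reindex_bij_betw[OF bij, of "\<lambda>x. x"] by simp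
  have "(\<Sum>p\<in>{..<m} \<times> {..<n}. h p) = (\<Sum>i<m. \<Sum>j<n. h (i,j))"
    by (simp add: sum.cartesian_product)
  also have "(\<Sum>i<m. \<Sum>j<n. h (i,j)) mod N = 0"
  proof -
    have "(\<Sum>i<m. \<Sum>j<n. h (i,j)) mod N = (\<Sum>i<m. (\<Sum>j<n. h (i,j)) mod N) mod N"
      by (simp add: mod_sum_eq)
    also have "\<dots> = 0" using rowsum by simp
    finally show ?thesis .
  qed
  finally have T: "(\<Sum>x\<in>{1..<N}. x) mod N = 0" using tot by simp
  have "2*2 \<le> m*n" using m n by (intro mult_le_mono) auto
  then have N5: "N \<ge> 5" by (simp add: N_def)
  have oddN: "odd N"
  proof
    assume "even N"
    then obtain k where k: "N = 2*k" by blast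
    have k1: "k \<ge> 1" using N5 k by simp
    have "2 * (\<Sum>x\<in>{1..<N}. x) = N * (N - 1)" by (rule two_sum_upto)
    then have S: "(\<Sum>x\<in>{1..<N}. x) = k * (2*k - 1)" using k by simp
    have "k * (2*k - 1) = (k - 1) * (2*k) + k" using k1
      by (cases k) (auto simp: algebra_simps)
    then have "(k * (2*k - 1)) mod (2*k) = k mod (2*k)" by simp
    also have "\<dots> = k" using k1 by simp
    finally show False using T S k k1 by simp
  qed
  have gt5: "N > 5"
  proof (rule ccontr)
    assume "\<not> N > 5"
    then have "N = 5" using N5 by simp
    then have mn4: "m*n = 4" by (simp add: N_def)
    have "m \<le> 2"
    proof (rule ccontr)
      assume "\<not> m \<le> 2"
      then have "3*2 \<le> m*n" using n by (intro mult_le_mono) auto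
      then show False using mn4 by simp
    qed
    moreover have "n \<le> 2"
    proof (rule ccontr)
      assume "\<not> n \<le> 2"
      then have "2*3 \<le> m*n" using m by (intro mult_le_mono) auto
      then show False using mn4 by simp
    qed
    ultimately have mn: "m = 2" "n = 2" using m n by auto
    have r0: "(h (0,0) + h (0,1)) mod 5 = 0"
      using rowsum[of 0] mn \<open>N = 5\<close> by (simp add: numeral_2_eq_2)
    have c0: "(h (0,0) + h (1,0)) mod 5 = 0"
      using colsum[of 0] mn \<open>N = 5\<close> by (simp add: numeral_2_eq_2)
    have a: "h (0,1) \<in> {1..<5}" "h (1,0) \<in> {1..<5}" "h (0,0) \<in> {1..<5}"
      using inO mn \<open>N = 5\<close> by auto
    have a1: "1 \<le> h (0,0)" "h (0,0) < 5" "1 \<le> h (0,1)" "h (0,1) < 5" "1 \<le> h (1,0)" "h (1,0) < 5"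
      using a by auto
    have e1: "h (0,0) + h (0,1) = 5" using r0 a1 by presburger
    have e2: "h (0,0) + h (1,0) = 5" using c0 a1 by presburger
    have "h (0,1) = h (1,0)" using e1 e2 by simp
    moreover have "h (0,1) \<noteq> h (1,0)"
      using bij mn unfolding bij_betw_def inj_on_def by force
    ultimately show False by simp
  qed
  show ?thesis using oddN gt5 by (simp add: N_def)
qed


lemma content_isma:
  assumes ev: "m*n = 2*L"
    and inj: "inj_on (\<lambda>(i,q). c i q) ({..<m} \<times> {..<n})"
    and rng: "\<And>i q. i < m \<Longrightarrow> q < n \<Longrightarrow> c i q \<in> SV L"
    and perm: "\<And>i. i < m \<Longrightarrow> bij_betw (\<pi> i) {..<n} {..<n}"
    and rows: "\<And>i. i < m \<Longrightarrow> (\<Sum>q<n. c i q) = 0"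
    and cols: "\<And>j. j < n \<Longrightarrow> (\<Sum>i<m. c i (\<pi> i j)) = 0"
  shows "isma m n (\<lambda>i j. c i (\<pi> i j))"
proof -
  have bp: "bij_betw (\<lambda>(i,j). (i, \<pi> i j)) ({..<m} \<times> {..<n}) ({..<m} \<times> {..<n})"
    unfolding bij_betw_def
  proof
    show "inj_on (\<lambda>(i,j). (i, \<pi> i j)) ({..<m} \<times> {..<n})"
    proof (rule inj_onI, clarsimp)
      fix i j j' assume "i < m" "j < n" "j' < n" "\<pi> i j = \<pi> i j'"
      then show "j = j'" using perm[of i] unfolding bij_betw_def inj_on_def by blast
    qed
    show "(\<lambda>(i,j). (i, \<pi> i j)) ` ({..<m} \<times> {..<n}) = {..<m} \<times> {..<n}"
    proof
      show "(\<lambda>(i,j). (i, \<pi> i j)) ` ({..<m} \<times> {..<n}) \<subseteq> {..<m} \<times> {..<n}"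
        using perm unfolding bij_betw_def by auto
      show "{..<m} \<times> {..<n} \<subseteq> (\<lambda>(i,j). (i, \<pi> i j)) ` ({..<m} \<times> {..<n})"
      proof (clarsimp)
        fix i s assume i: "i < m" and s: "s < n"
        have "s \<in> \<pi> i ` {..<n}" using perm[OF i] s unfolding bij_betw_def by auto
        then obtain j where "j < n" "\<pi> i j = s" by auto
        then show "(i, s) \<in> (\<lambda>(i,j). (i, \<pi> i j)) ` ({..<m} \<times> {..<n})"
          using i by (auto intro!: image_eqI[where x="(i,j)"])
      qed
    qed
  qed
  have bc: "bij_betw (\<lambda>(i,q). c i q) ({..<m} \<times> {..<n}) (SV L)"
  proof -
    have sub: "(\<lambda>(i,q). c i q) ` ({..<m} \<times> {..<n}) \<subseteq> SV L" using rng by auto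
    have "card ((\<lambda>(i,q). c i q) ` ({..<m} \<times> {..<n})) = card (SV L)"
      using card_image[OF inj] ev by (simp add: card_SV card_cartesian_product)
    then have "(\<lambda>(i,q). c i q) ` ({..<m} \<times> {..<n}) = SV L"
      using sub by (intro card_subset_eq) auto
    then show ?thesis using inj by (simp add: bij_betw_def)
  qed
  have b: "bij_betw ((\<lambda>(i,q). c i q) \<circ> (\<lambda>(i,j). (i, \<pi> i j))) ({..<m} \<times> {..<n}) (SV L)"
    by (rule bij_betw_trans[OF bp bc])
  have b': "bij_betw (\<lambda>(i,j). c i (\<pi> i j)) ({..<m} \<times> {..<n}) (SV (m*n div 2))"
  proof -
    have "(\<lambda>(i,q). c i q) \<circ> (\<lambda>(i,j). (i, \<pi> i j)) = (\<lambda>(i,j). c i (\<pi> i j))"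
      by (auto simp: fun_eq_iff)
    then show ?thesis using b ev by simp
  qed
  have r: "(\<Sum>j<n. c i (\<pi> i j)) = 0" if "i < m" for i
  proof -
    have "(\<Sum>j<n. c i (\<pi> i j)) = (\<Sum>q<n. c i q)"
      using sum.reindex_bij_betw[OF perm[OF that], of "c i"] by simp
    then show ?thesis using rows[OF that] by simp
  qed
  show ?thesis unfolding isma_def using ev b' r cols by auto
qed

lemma perm_list_bij:
  assumes "distinct xs" "set xs = {..<n}"
  shows "bij_betw ((!) xs) {..<n} {..<n}"
proof -
  have "length xs = n" using distinct_card[OF assms(1)] assms(2) by simp
  then show ?thesis using assms by (intro bij_betw_nth) auto
qed

lemma two_lin_sum:
  assumes "a \<le> b"
  shows "2 * (\<Sum>i\<in>{a..<b}. (\<alpha>::int) + \<beta> * int i) =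
         2 * (int b - int a) * \<alpha> + \<beta> * (int b * (int b - 1) - int a * (int a - 1))"
  using assms
proof (induction b)
  case 0 then show ?case by simp
next
  case (Suc b)
  show ?case
  proof (cases "a = Suc b")
    case True then show ?thesis by simp
  next
    case False
    then have ab: "a \<le> b" using Suc.prems by simp
    have "{a..<Suc b} = insert b {a..<b}" using ab by auto
    then have "(\<Sum>i\<in>{a..<Suc b}. \<alpha> + \<beta> * int i) = (\<alpha> + \<beta> * int b) + (\<Sum>i\<in>{a..<b}. \<alpha> + \<beta> * int i)"
      by simp
    then show ?thesis using Suc.IH[OF ab] by (simp add: algebra_simps)
  qed
qed

lemma part_sum:
  assumes "a \<le> b" "\<And>i. a \<le> i \<Longrightarrow> i < b \<Longrightarrow> X i = (\<alpha>::int) + \<beta> * int i"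
  shows "2 * sum X {a..<b} = 2 * (int b - int a) * \<alpha> + \<beta> * (int b * (int b - 1) - int a * (int a - 1))"
proof -
  have "sum X {a..<b} = (\<Sum>i\<in>{a..<b}. \<alpha> + \<beta> * int i)" using assms(2) by (intro sum.cong) auto
  then show ?thesis using two_lin_sum[OF assms(1)] by simp
qed

lemma sumsplit: "a \<le> b \<Longrightarrow> b \<le> c \<Longrightarrow> sum f {a..<c} = sum f {a..<b} + sum f {b..<(c::nat)}"
  by (simp add: sum.atLeastLessThan_concat)

definition cc :: "nat \<Rightarrow> nat \<Rightarrow> nat \<Rightarrow> int" where
  "cc p i q = (if q = 0 then (if i < p then 1 + int i else int i - 3 * int p)
     else if q = 1 then (if i < p then 3 * int p - 1 - 2 * int i else 5 * int p - 2 * int i)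
     else if q = 2 then (if i < p then int i - 3 * int p else int i - 2 * int p)
     else if q = 3 then 5 * int p - int i else int i - 5 * int p)"


lemma cc_inj_aux:
  assumes "i < 2*p" "q < 5" "i' < 2*p" "q' < 5" "cc p i q = cc p i' q'"
  shows "i = i' \<and> q = q'"
proof -
  have qs: "q = 0 \<or> q = 1 \<or> q = 2 \<or> q = 3 \<or> q = 4" using assms by auto
  have qs': "q' = 0 \<or> q' = 1 \<or> q' = 2 \<or> q' = 3 \<or> q' = 4" using assms by auto
  show ?thesis
    using qs qs' assms by (auto simp: cc_def split: if_splits; presburger)
qed

lemma cc_inj: "inj_on (\<lambda>(i,q). cc p i q) ({..<2*p} \<times> {..<5})"
  by (rule inj_onI) (auto dest: cc_inj_aux)


definition plE3 :: "nat \<Rightarrow> nat \<Rightarrow> nat list" where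
  "plE3 q i = (if i < q then [0,1,2] else if i < 2*q then [0,2,1] else if i < 3*q then [2,0,1] else [2,1,0])"

lemma plE3_bij: "bij_betw (\<lambda>j. plE3 q i ! j) {..<3} {..<3}"
  unfolding plE3_def by (auto intro!: perm_list_bij)

lemma E3_col0:
  assumes q: "q \<ge> 1"
  shows "(\<Sum>i<2*(2*q). cc (2*q) i (plE3 q i ! 0)) = 0"
proof -
  define X where "X i = cc (2*q) i (plE3 q i ! 0)" for i
  have s1: "sum X {0..<4*q} = sum X {0..<q} + sum X {q..<4*q}"
    by (rule sumsplit) (use q in simp_all)
  have s2: "sum X {q..<4*q} = sum X {q..<2*q} + sum X {2*q..<4*q}"
    by (rule sumsplit) (use q in simp_all)
  have s3: "sum X {2*q..<4*q} = sum X {2*q..<3*q} + sum X {3*q..<4*q}"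
    by (rule sumsplit) (use q in simp_all)
  have p0: "2 * sum X {0..<q} = 2 * (int (q) - int (0)) * (1) + (1) * (int (q) * (int (q) - 1) - int (0) * (int (0) - 1))"
    by (rule part_sum) (use q in \<open>simp_all add: X_def cc_def plE3_def\<close>)
  have p1: "2 * sum X {q..<2*q} = 2 * (int (2*q) - int (q)) * (1) + (1) * (int (2*q) * (int (2*q) - 1) - int (q) * (int (q) - 1))"
    by (rule part_sum) (use q in \<open>simp_all add: X_def cc_def plE3_def\<close>)
  have p2: "2 * sum X {2*q..<3*q} = 2 * (int (3*q) - int (2*q)) * (- 2 * (int (2*q))) + (1) * (int (3*q) * (int (3*q) - 1) - int (2*q) * (int (2*q) - 1))"
    by (rule part_sum) (use q in \<open>simp_all add: X_def cc_def plE3_def\<close>)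
  have p3: "2 * sum X {3*q..<4*q} = 2 * (int (4*q) - int (3*q)) * (- 2 * (int (2*q))) + (1) * (int (4*q) * (int (4*q) - 1) - int (3*q) * (int (3*q) - 1))"
    by (rule part_sum) (use q in \<open>simp_all add: X_def cc_def plE3_def\<close>)
  have "2 * sum X {0..<4*q} = 0"
    unfolding s1 s2 s3 using p0 p1 p2 p3 by (simp add: algebra_simps)
  then have Z: "sum X {0..<4*q} = 0" by simp
  have "(\<Sum>i<2*(2*q). X i) = 0" using Z by (simp add: lessThan_atLeast0)
  then show ?thesis by (simp add: X_def)
qed

lemma E3_col1:
  assumes q: "q \<ge> 1"
  shows "(\<Sum>i<2*(2*q). cc (2*q) i (plE3 q i ! 1)) = 0"
proof -
  define X where "X i = cc (2*q) i (plE3 q i ! 1)" for i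
  have s1: "sum X {0..<4*q} = sum X {0..<q} + sum X {q..<4*q}"
    by (rule sumsplit) (use q in simp_all)
  have s2: "sum X {q..<4*q} = sum X {q..<2*q} + sum X {2*q..<4*q}"
    by (rule sumsplit) (use q in simp_all)
  have s3: "sum X {2*q..<4*q} = sum X {2*q..<3*q} + sum X {3*q..<4*q}"
    by (rule sumsplit) (use q in simp_all)
  have p0: "2 * sum X {0..<q} = 2 * (int (q) - int (0)) * (3 * (int (2*q)) - 1) + (- 2) * (int (q) * (int (q) - 1) - int (0) * (int (0) - 1))"
    by (rule part_sum) (use q in \<open>simp_all add: X_def cc_def plE3_def\<close>)
  have p1: "2 * sum X {q..<2*q} = 2 * (int (2*q) - int (q)) * (- 3 * (int (2*q))) + (1) * (int (2*q) * (int (2*q) - 1) - int (q) * (int (q) - 1))"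
    by (rule part_sum) (use q in \<open>simp_all add: X_def cc_def plE3_def\<close>)
  have p2: "2 * sum X {2*q..<3*q} = 2 * (int (3*q) - int (2*q)) * (- 3 * (int (2*q))) + (1) * (int (3*q) * (int (3*q) - 1) - int (2*q) * (int (2*q) - 1))"
    by (rule part_sum) (use q in \<open>simp_all add: X_def cc_def plE3_def\<close>)
  have p3: "2 * sum X {3*q..<4*q} = 2 * (int (4*q) - int (3*q)) * (5 * (int (2*q))) + (- 2) * (int (4*q) * (int (4*q) - 1) - int (3*q) * (int (3*q) - 1))"
    by (rule part_sum) (use q in \<open>simp_all add: X_def cc_def plE3_def\<close>)
  have "2 * sum X {0..<4*q} = 0"
    unfolding s1 s2 s3 using p0 p1 p2 p3 by (simp add: algebra_simps)
  then have Z: "sum X {0..<4*q} = 0" by simp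
  have "(\<Sum>i<2*(2*q). X i) = 0" using Z by (simp add: lessThan_atLeast0)
  then show ?thesis by (simp add: X_def)
qed

lemma E3_col2:
  assumes q: "q \<ge> 1"
  shows "(\<Sum>i<2*(2*q). cc (2*q) i (plE3 q i ! 2)) = 0"
proof -
  define X where "X i = cc (2*q) i (plE3 q i ! 2)" for i
  have s1: "sum X {0..<4*q} = sum X {0..<q} + sum X {q..<4*q}"
    by (rule sumsplit) (use q in simp_all)
  have s2: "sum X {q..<4*q} = sum X {q..<2*q} + sum X {2*q..<4*q}"
    by (rule sumsplit) (use q in simp_all)
  have s3: "sum X {2*q..<4*q} = sum X {2*q..<3*q} + sum X {3*q..<4*q}"
    by (rule sumsplit) (use q in simp_all)
  have p0: "2 * sum X {0..<q} = 2 * (int (q) - int (0)) * (- 3 * (int (2*q))) + (1) * (int (q) * (int (q) - 1) - int (0) * (int (0) - 1))"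
    by (rule part_sum) (use q in \<open>simp_all add: X_def cc_def plE3_def\<close>)
  have p1: "2 * sum X {q..<2*q} = 2 * (int (2*q) - int (q)) * (3 * (int (2*q)) - 1) + (- 2) * (int (2*q) * (int (2*q) - 1) - int (q) * (int (q) - 1))"
    by (rule part_sum) (use q in \<open>simp_all add: X_def cc_def plE3_def\<close>)
  have p2: "2 * sum X {2*q..<3*q} = 2 * (int (3*q) - int (2*q)) * (5 * (int (2*q))) + (- 2) * (int (3*q) * (int (3*q) - 1) - int (2*q) * (int (2*q) - 1))"
    by (rule part_sum) (use q in \<open>simp_all add: X_def cc_def plE3_def\<close>)
  have p3: "2 * sum X {3*q..<4*q} = 2 * (int (4*q) - int (3*q)) * (- 3 * (int (2*q))) + (1) * (int (4*q) * (int (4*q) - 1) - int (3*q) * (int (3*q) - 1))"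
    by (rule part_sum) (use q in \<open>simp_all add: X_def cc_def plE3_def\<close>)
  have "2 * sum X {0..<4*q} = 0"
    unfolding s1 s2 s3 using p0 p1 p2 p3 by (simp add: algebra_simps)
  then have Z: "sum X {0..<4*q} = 0" by simp
  have "(\<Sum>i<2*(2*q). X i) = 0" using Z by (simp add: lessThan_atLeast0)
  then show ?thesis by (simp add: X_def)
qed

definition plO3 :: "nat \<Rightarrow> nat \<Rightarrow> nat list" where
  "plO3 q i = (if i < 1 then [0,1,2] else if i < 2 then [2,0,1] else if i < q+1 then [2,1,0] else if i < 2*q+1 then [1,2,0] else if i < 3*q+1 then [1,0,2] else if i < 4*q then [0,1,2] else if i < 4*q+1 then [0,2,1] else [2,1,0])"

lemma plO3_bij: "bij_betw (\<lambda>j. plO3 q i ! j) {..<3} {..<3}"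
  unfolding plO3_def by (auto intro!: perm_list_bij)

lemma O3_col0:
  assumes q: "q \<ge> 1"
  shows "(\<Sum>i<2*(2*q+1). cc (2*q+1) i (plO3 q i ! 0)) = 0"
proof -
  define X where "X i = cc (2*q+1) i (plO3 q i ! 0)" for i
  have s1: "sum X {0..<4*q+2} = sum X {0..<1} + sum X {1..<4*q+2}"
    by (rule sumsplit) (use q in simp_all)
  have s2: "sum X {1..<4*q+2} = sum X {1..<2} + sum X {2..<4*q+2}"
    by (rule sumsplit) (use q in simp_all)
  have s3: "sum X {2..<4*q+2} = sum X {2..<q+1} + sum X {q+1..<4*q+2}"
    by (rule sumsplit) (use q in simp_all)
  have s4: "sum X {q+1..<4*q+2} = sum X {q+1..<2*q+1} + sum X {2*q+1..<4*q+2}"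
    by (rule sumsplit) (use q in simp_all)
  have s5: "sum X {2*q+1..<4*q+2} = sum X {2*q+1..<3*q+1} + sum X {3*q+1..<4*q+2}"
    by (rule sumsplit) (use q in simp_all)
  have s6: "sum X {3*q+1..<4*q+2} = sum X {3*q+1..<4*q} + sum X {4*q..<4*q+2}"
    by (rule sumsplit) (use q in simp_all)
  have s7: "sum X {4*q..<4*q+2} = sum X {4*q..<4*q+1} + sum X {4*q+1..<4*q+2}"
    by (rule sumsplit) (use q in simp_all)
  have p0: "2 * sum X {0..<1} = 2 * (int (1) - int (0)) * (1) + (1) * (int (1) * (int (1) - 1) - int (0) * (int (0) - 1))"
    by (rule part_sum) (use q in \<open>simp_all add: X_def cc_def plO3_def\<close>)
  have p1: "2 * sum X {1..<2} = 2 * (int (2) - int (1)) * (- 3 * (int (2*q+1))) + (1) * (int (2) * (int (2) - 1) - int (1) * (int (1) - 1))"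
    by (rule part_sum) (use q in \<open>simp_all add: X_def cc_def plO3_def\<close>)
  have p2: "2 * sum X {2..<q+1} = 2 * (int (q+1) - int (2)) * (- 3 * (int (2*q+1))) + (1) * (int (q+1) * (int (q+1) - 1) - int (2) * (int (2) - 1))"
    by (rule part_sum) (use q in \<open>simp_all add: X_def cc_def plO3_def\<close>)
  have p3: "2 * sum X {q+1..<2*q+1} = 2 * (int (2*q+1) - int (q+1)) * (3 * (int (2*q+1)) - 1) + (- 2) * (int (2*q+1) * (int (2*q+1) - 1) - int (q+1) * (int (q+1) - 1))"
    by (rule part_sum) (use q in \<open>simp_all add: X_def cc_def plO3_def\<close>)
  have p4: "2 * sum X {2*q+1..<3*q+1} = 2 * (int (3*q+1) - int (2*q+1)) * (5 * (int (2*q+1))) + (- 2) * (int (3*q+1) * (int (3*q+1) - 1) - int (2*q+1) * (int (2*q+1) - 1))"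
    by (rule part_sum) (use q in \<open>simp_all add: X_def cc_def plO3_def\<close>)
  have p5: "2 * sum X {3*q+1..<4*q} = 2 * (int (4*q) - int (3*q+1)) * (- 3 * (int (2*q+1))) + (1) * (int (4*q) * (int (4*q) - 1) - int (3*q+1) * (int (3*q+1) - 1))"
    by (rule part_sum) (use q in \<open>simp_all add: X_def cc_def plO3_def\<close>)
  have p6: "2 * sum X {4*q..<4*q+1} = 2 * (int (4*q+1) - int (4*q)) * (- 3 * (int (2*q+1))) + (1) * (int (4*q+1) * (int (4*q+1) - 1) - int (4*q) * (int (4*q) - 1))"
    by (rule part_sum) (use q in \<open>simp_all add: X_def cc_def plO3_def\<close>)
  have p7: "2 * sum X {4*q+1..<4*q+2} = 2 * (int (4*q+2) - int (4*q+1)) * (- 2 * (int (2*q+1))) + (1) * (int (4*q+2) * (int (4*q+2) - 1) - int (4*q+1) * (int (4*q+1) - 1))"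
    by (rule part_sum) (use q in \<open>simp_all add: X_def cc_def plO3_def\<close>)
  have "2 * sum X {0..<4*q+2} = 0"
    unfolding s1 s2 s3 s4 s5 s6 s7 using p0 p1 p2 p3 p4 p5 p6 p7 by (simp add: algebra_simps)
  then have Z: "sum X {0..<4*q+2} = 0" by simp
  have "(\<Sum>i<2*(2*q+1). X i) = 0" using Z by (simp add: lessThan_atLeast0)
  then show ?thesis by (simp add: X_def)
qed

lemma O3_col1:
  assumes q: "q \<ge> 1"
  shows "(\<Sum>i<2*(2*q+1). cc (2*q+1) i (plO3 q i ! 1)) = 0"
proof -
  define X where "X i = cc (2*q+1) i (plO3 q i ! 1)" for i
  have s1: "sum X {0..<4*q+2} = sum X {0..<1} + sum X {1..<4*q+2}"
    by (rule sumsplit) (use q in simp_all)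
  have s2: "sum X {1..<4*q+2} = sum X {1..<2} + sum X {2..<4*q+2}"
    by (rule sumsplit) (use q in simp_all)
  have s3: "sum X {2..<4*q+2} = sum X {2..<q+1} + sum X {q+1..<4*q+2}"
    by (rule sumsplit) (use q in simp_all)
  have s4: "sum X {q+1..<4*q+2} = sum X {q+1..<2*q+1} + sum X {2*q+1..<4*q+2}"
    by (rule sumsplit) (use q in simp_all)
  have s5: "sum X {2*q+1..<4*q+2} = sum X {2*q+1..<3*q+1} + sum X {3*q+1..<4*q+2}"
    by (rule sumsplit) (use q in simp_all)
  have s6: "sum X {3*q+1..<4*q+2} = sum X {3*q+1..<4*q} + sum X {4*q..<4*q+2}"
    by (rule sumsplit) (use q in simp_all)
  have s7: "sum X {4*q..<4*q+2} = sum X {4*q..<4*q+1} + sum X {4*q+1..<4*q+2}"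
    by (rule sumsplit) (use q in simp_all)
  have p0: "2 * sum X {0..<1} = 2 * (int (1) - int (0)) * (3 * (int (2*q+1)) - 1) + (- 2) * (int (1) * (int (1) - 1) - int (0) * (int (0) - 1))"
    by (rule part_sum) (use q in \<open>simp_all add: X_def cc_def plO3_def\<close>)
  have p1: "2 * sum X {1..<2} = 2 * (int (2) - int (1)) * (1) + (1) * (int (2) * (int (2) - 1) - int (1) * (int (1) - 1))"
    by (rule part_sum) (use q in \<open>simp_all add: X_def cc_def plO3_def\<close>)
  have p2: "2 * sum X {2..<q+1} = 2 * (int (q+1) - int (2)) * (3 * (int (2*q+1)) - 1) + (- 2) * (int (q+1) * (int (q+1) - 1) - int (2) * (int (2) - 1))"
    by (rule part_sum) (use q in \<open>simp_all add: X_def cc_def plO3_def\<close>)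
  have p3: "2 * sum X {q+1..<2*q+1} = 2 * (int (2*q+1) - int (q+1)) * (- 3 * (int (2*q+1))) + (1) * (int (2*q+1) * (int (2*q+1) - 1) - int (q+1) * (int (q+1) - 1))"
    by (rule part_sum) (use q in \<open>simp_all add: X_def cc_def plO3_def\<close>)
  have p4: "2 * sum X {2*q+1..<3*q+1} = 2 * (int (3*q+1) - int (2*q+1)) * (- 3 * (int (2*q+1))) + (1) * (int (3*q+1) * (int (3*q+1) - 1) - int (2*q+1) * (int (2*q+1) - 1))"
    by (rule part_sum) (use q in \<open>simp_all add: X_def cc_def plO3_def\<close>)
  have p5: "2 * sum X {3*q+1..<4*q} = 2 * (int (4*q) - int (3*q+1)) * (5 * (int (2*q+1))) + (- 2) * (int (4*q) * (int (4*q) - 1) - int (3*q+1) * (int (3*q+1) - 1))"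
    by (rule part_sum) (use q in \<open>simp_all add: X_def cc_def plO3_def\<close>)
  have p6: "2 * sum X {4*q..<4*q+1} = 2 * (int (4*q+1) - int (4*q)) * (- 2 * (int (2*q+1))) + (1) * (int (4*q+1) * (int (4*q+1) - 1) - int (4*q) * (int (4*q) - 1))"
    by (rule part_sum) (use q in \<open>simp_all add: X_def cc_def plO3_def\<close>)
  have p7: "2 * sum X {4*q+1..<4*q+2} = 2 * (int (4*q+2) - int (4*q+1)) * (5 * (int (2*q+1))) + (- 2) * (int (4*q+2) * (int (4*q+2) - 1) - int (4*q+1) * (int (4*q+1) - 1))"
    by (rule part_sum) (use q in \<open>simp_all add: X_def cc_def plO3_def\<close>)
  have "2 * sum X {0..<4*q+2} = 0"
    unfolding s1 s2 s3 s4 s5 s6 s7 using p0 p1 p2 p3 p4 p5 p6 p7 by (simp add: algebra_simps)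
  then have Z: "sum X {0..<4*q+2} = 0" by simp
  have "(\<Sum>i<2*(2*q+1). X i) = 0" using Z by (simp add: lessThan_atLeast0)
  then show ?thesis by (simp add: X_def)
qed

lemma O3_col2:
  assumes q: "q \<ge> 1"
  shows "(\<Sum>i<2*(2*q+1). cc (2*q+1) i (plO3 q i ! 2)) = 0"
proof -
  define X where "X i = cc (2*q+1) i (plO3 q i ! 2)" for i
  have s1: "sum X {0..<4*q+2} = sum X {0..<1} + sum X {1..<4*q+2}"
    by (rule sumsplit) (use q in simp_all)
  have s2: "sum X {1..<4*q+2} = sum X {1..<2} + sum X {2..<4*q+2}"
    by (rule sumsplit) (use q in simp_all)
  have s3: "sum X {2..<4*q+2} = sum X {2..<q+1} + sum X {q+1..<4*q+2}"
    by (rule sumsplit) (use q in simp_all)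
  have s4: "sum X {q+1..<4*q+2} = sum X {q+1..<2*q+1} + sum X {2*q+1..<4*q+2}"
    by (rule sumsplit) (use q in simp_all)
  have s5: "sum X {2*q+1..<4*q+2} = sum X {2*q+1..<3*q+1} + sum X {3*q+1..<4*q+2}"
    by (rule sumsplit) (use q in simp_all)
  have s6: "sum X {3*q+1..<4*q+2} = sum X {3*q+1..<4*q} + sum X {4*q..<4*q+2}"
    by (rule sumsplit) (use q in simp_all)
  have s7: "sum X {4*q..<4*q+2} = sum X {4*q..<4*q+1} + sum X {4*q+1..<4*q+2}"
    by (rule sumsplit) (use q in simp_all)
  have p0: "2 * sum X {0..<1} = 2 * (int (1) - int (0)) * (- 3 * (int (2*q+1))) + (1) * (int (1) * (int (1) - 1) - int (0) * (int (0) - 1))"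
    by (rule part_sum) (use q in \<open>simp_all add: X_def cc_def plO3_def\<close>)
  have p1: "2 * sum X {1..<2} = 2 * (int (2) - int (1)) * (3 * (int (2*q+1)) - 1) + (- 2) * (int (2) * (int (2) - 1) - int (1) * (int (1) - 1))"
    by (rule part_sum) (use q in \<open>simp_all add: X_def cc_def plO3_def\<close>)
  have p2: "2 * sum X {2..<q+1} = 2 * (int (q+1) - int (2)) * (1) + (1) * (int (q+1) * (int (q+1) - 1) - int (2) * (int (2) - 1))"
    by (rule part_sum) (use q in \<open>simp_all add: X_def cc_def plO3_def\<close>)
  have p3: "2 * sum X {q+1..<2*q+1} = 2 * (int (2*q+1) - int (q+1)) * (1) + (1) * (int (2*q+1) * (int (2*q+1) - 1) - int (q+1) * (int (q+1) - 1))"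
    by (rule part_sum) (use q in \<open>simp_all add: X_def cc_def plO3_def\<close>)
  have p4: "2 * sum X {2*q+1..<3*q+1} = 2 * (int (3*q+1) - int (2*q+1)) * (- 2 * (int (2*q+1))) + (1) * (int (3*q+1) * (int (3*q+1) - 1) - int (2*q+1) * (int (2*q+1) - 1))"
    by (rule part_sum) (use q in \<open>simp_all add: X_def cc_def plO3_def\<close>)
  have p5: "2 * sum X {3*q+1..<4*q} = 2 * (int (4*q) - int (3*q+1)) * (- 2 * (int (2*q+1))) + (1) * (int (4*q) * (int (4*q) - 1) - int (3*q+1) * (int (3*q+1) - 1))"
    by (rule part_sum) (use q in \<open>simp_all add: X_def cc_def plO3_def\<close>)
  have p6: "2 * sum X {4*q..<4*q+1} = 2 * (int (4*q+1) - int (4*q)) * (5 * (int (2*q+1))) + (- 2) * (int (4*q+1) * (int (4*q+1) - 1) - int (4*q) * (int (4*q) - 1))"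
    by (rule part_sum) (use q in \<open>simp_all add: X_def cc_def plO3_def\<close>)
  have p7: "2 * sum X {4*q+1..<4*q+2} = 2 * (int (4*q+2) - int (4*q+1)) * (- 3 * (int (2*q+1))) + (1) * (int (4*q+2) * (int (4*q+2) - 1) - int (4*q+1) * (int (4*q+1) - 1))"
    by (rule part_sum) (use q in \<open>simp_all add: X_def cc_def plO3_def\<close>)
  have "2 * sum X {0..<4*q+2} = 0"
    unfolding s1 s2 s3 s4 s5 s6 s7 using p0 p1 p2 p3 p4 p5 p6 p7 by (simp add: algebra_simps)
  then have Z: "sum X {0..<4*q+2} = 0" by simp
  have "(\<Sum>i<2*(2*q+1). X i) = 0" using Z by (simp add: lessThan_atLeast0)
  then show ?thesis by (simp add: X_def)
qed

definition plO5 :: "nat \<Rightarrow> nat \<Rightarrow> nat list" where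
  "plO5 q i = (if i < 1 then [0,2,3,1,4] else if i < 2 then [2,1,4,3,0] else if i < q+1 then [2,1,0,3,4] else if i < 2*q+1 then [1,2,0,4,3] else if i < 3*q+1 then [1,0,2,4,3] else if i < 4*q then [0,1,2,3,4] else if i < 4*q+1 then [0,3,4,1,2] else [2,1,3,0,4])"

lemma plO5_bij: "bij_betw (\<lambda>j. plO5 q i ! j) {..<5} {..<5}"
  unfolding plO5_def by (auto intro!: perm_list_bij)

lemma O5_col0:
  assumes q: "q \<ge> 1"
  shows "(\<Sum>i<2*(2*q+1). cc (2*q+1) i (plO5 q i ! 0)) = 0"
proof -
  define X where "X i = cc (2*q+1) i (plO5 q i ! 0)" for i
  have s1: "sum X {0..<4*q+2} = sum X {0..<1} + sum X {1..<4*q+2}"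
    by (rule sumsplit) (use q in simp_all)
  have s2: "sum X {1..<4*q+2} = sum X {1..<2} + sum X {2..<4*q+2}"
    by (rule sumsplit) (use q in simp_all)
  have s3: "sum X {2..<4*q+2} = sum X {2..<q+1} + sum X {q+1..<4*q+2}"
    by (rule sumsplit) (use q in simp_all)
  have s4: "sum X {q+1..<4*q+2} = sum X {q+1..<2*q+1} + sum X {2*q+1..<4*q+2}"
    by (rule sumsplit) (use q in simp_all)
  have s5: "sum X {2*q+1..<4*q+2} = sum X {2*q+1..<3*q+1} + sum X {3*q+1..<4*q+2}"
    by (rule sumsplit) (use q in simp_all)
  have s6: "sum X {3*q+1..<4*q+2} = sum X {3*q+1..<4*q} + sum X {4*q..<4*q+2}"
    by (rule sumsplit) (use q in simp_all)
  have s7: "sum X {4*q..<4*q+2} = sum X {4*q..<4*q+1} + sum X {4*q+1..<4*q+2}"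
    by (rule sumsplit) (use q in simp_all)
  have p0: "2 * sum X {0..<1} = 2 * (int (1) - int (0)) * (1) + (1) * (int (1) * (int (1) - 1) - int (0) * (int (0) - 1))"
    by (rule part_sum) (use q in \<open>simp_all add: X_def cc_def plO5_def\<close>)
  have p1: "2 * sum X {1..<2} = 2 * (int (2) - int (1)) * (- 3 * (int (2*q+1))) + (1) * (int (2) * (int (2) - 1) - int (1) * (int (1) - 1))"
    by (rule part_sum) (use q in \<open>simp_all add: X_def cc_def plO5_def\<close>)
  have p2: "2 * sum X {2..<q+1} = 2 * (int (q+1) - int (2)) * (- 3 * (int (2*q+1))) + (1) * (int (q+1) * (int (q+1) - 1) - int (2) * (int (2) - 1))"
    by (rule part_sum) (use q in \<open>simp_all add: X_def cc_def plO5_def\<close>)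
  have p3: "2 * sum X {q+1..<2*q+1} = 2 * (int (2*q+1) - int (q+1)) * (3 * (int (2*q+1)) - 1) + (- 2) * (int (2*q+1) * (int (2*q+1) - 1) - int (q+1) * (int (q+1) - 1))"
    by (rule part_sum) (use q in \<open>simp_all add: X_def cc_def plO5_def\<close>)
  have p4: "2 * sum X {2*q+1..<3*q+1} = 2 * (int (3*q+1) - int (2*q+1)) * (5 * (int (2*q+1))) + (- 2) * (int (3*q+1) * (int (3*q+1) - 1) - int (2*q+1) * (int (2*q+1) - 1))"
    by (rule part_sum) (use q in \<open>simp_all add: X_def cc_def plO5_def\<close>)
  have p5: "2 * sum X {3*q+1..<4*q} = 2 * (int (4*q) - int (3*q+1)) * (- 3 * (int (2*q+1))) + (1) * (int (4*q) * (int (4*q) - 1) - int (3*q+1) * (int (3*q+1) - 1))"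
    by (rule part_sum) (use q in \<open>simp_all add: X_def cc_def plO5_def\<close>)
  have p6: "2 * sum X {4*q..<4*q+1} = 2 * (int (4*q+1) - int (4*q)) * (- 3 * (int (2*q+1))) + (1) * (int (4*q+1) * (int (4*q+1) - 1) - int (4*q) * (int (4*q) - 1))"
    by (rule part_sum) (use q in \<open>simp_all add: X_def cc_def plO5_def\<close>)
  have p7: "2 * sum X {4*q+1..<4*q+2} = 2 * (int (4*q+2) - int (4*q+1)) * (- 2 * (int (2*q+1))) + (1) * (int (4*q+2) * (int (4*q+2) - 1) - int (4*q+1) * (int (4*q+1) - 1))"
    by (rule part_sum) (use q in \<open>simp_all add: X_def cc_def plO5_def\<close>)
  have "2 * sum X {0..<4*q+2} = 0"
    unfolding s1 s2 s3 s4 s5 s6 s7 using p0 p1 p2 p3 p4 p5 p6 p7 by (simp add: algebra_simps)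
  then have Z: "sum X {0..<4*q+2} = 0" by simp
  have "(\<Sum>i<2*(2*q+1). X i) = 0" using Z by (simp add: lessThan_atLeast0)
  then show ?thesis by (simp add: X_def)
qed

lemma O5_col1:
  assumes q: "q \<ge> 1"
  shows "(\<Sum>i<2*(2*q+1). cc (2*q+1) i (plO5 q i ! 1)) = 0"
proof -
  define X where "X i = cc (2*q+1) i (plO5 q i ! 1)" for i
  have s1: "sum X {0..<4*q+2} = sum X {0..<1} + sum X {1..<4*q+2}"
    by (rule sumsplit) (use q in simp_all)
  have s2: "sum X {1..<4*q+2} = sum X {1..<2} + sum X {2..<4*q+2}"
    by (rule sumsplit) (use q in simp_all)
  have s3: "sum X {2..<4*q+2} = sum X {2..<q+1} + sum X {q+1..<4*q+2}"
    by (rule sumsplit) (use q in simp_all)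
  have s4: "sum X {q+1..<4*q+2} = sum X {q+1..<2*q+1} + sum X {2*q+1..<4*q+2}"
    by (rule sumsplit) (use q in simp_all)
  have s5: "sum X {2*q+1..<4*q+2} = sum X {2*q+1..<3*q+1} + sum X {3*q+1..<4*q+2}"
    by (rule sumsplit) (use q in simp_all)
  have s6: "sum X {3*q+1..<4*q+2} = sum X {3*q+1..<4*q} + sum X {4*q..<4*q+2}"
    by (rule sumsplit) (use q in simp_all)
  have s7: "sum X {4*q..<4*q+2} = sum X {4*q..<4*q+1} + sum X {4*q+1..<4*q+2}"
    by (rule sumsplit) (use q in simp_all)
  have p0: "2 * sum X {0..<1} = 2 * (int (1) - int (0)) * (- 3 * (int (2*q+1))) + (1) * (int (1) * (int (1) - 1) - int (0) * (int (0) - 1))"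
    by (rule part_sum) (use q in \<open>simp_all add: X_def cc_def plO5_def\<close>)
  have p1: "2 * sum X {1..<2} = 2 * (int (2) - int (1)) * (3 * (int (2*q+1)) - 1) + (- 2) * (int (2) * (int (2) - 1) - int (1) * (int (1) - 1))"
    by (rule part_sum) (use q in \<open>simp_all add: X_def cc_def plO5_def\<close>)
  have p2: "2 * sum X {2..<q+1} = 2 * (int (q+1) - int (2)) * (3 * (int (2*q+1)) - 1) + (- 2) * (int (q+1) * (int (q+1) - 1) - int (2) * (int (2) - 1))"
    by (rule part_sum) (use q in \<open>simp_all add: X_def cc_def plO5_def\<close>)
  have p3: "2 * sum X {q+1..<2*q+1} = 2 * (int (2*q+1) - int (q+1)) * (- 3 * (int (2*q+1))) + (1) * (int (2*q+1) * (int (2*q+1) - 1) - int (q+1) * (int (q+1) - 1))"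
    by (rule part_sum) (use q in \<open>simp_all add: X_def cc_def plO5_def\<close>)
  have p4: "2 * sum X {2*q+1..<3*q+1} = 2 * (int (3*q+1) - int (2*q+1)) * (- 3 * (int (2*q+1))) + (1) * (int (3*q+1) * (int (3*q+1) - 1) - int (2*q+1) * (int (2*q+1) - 1))"
    by (rule part_sum) (use q in \<open>simp_all add: X_def cc_def plO5_def\<close>)
  have p5: "2 * sum X {3*q+1..<4*q} = 2 * (int (4*q) - int (3*q+1)) * (5 * (int (2*q+1))) + (- 2) * (int (4*q) * (int (4*q) - 1) - int (3*q+1) * (int (3*q+1) - 1))"
    by (rule part_sum) (use q in \<open>simp_all add: X_def cc_def plO5_def\<close>)
  have p6: "2 * sum X {4*q..<4*q+1} = 2 * (int (4*q+1) - int (4*q)) * (5 * (int (2*q+1))) + (- 1) * (int (4*q+1) * (int (4*q+1) - 1) - int (4*q) * (int (4*q) - 1))"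
    by (rule part_sum) (use q in \<open>simp_all add: X_def cc_def plO5_def\<close>)
  have p7: "2 * sum X {4*q+1..<4*q+2} = 2 * (int (4*q+2) - int (4*q+1)) * (5 * (int (2*q+1))) + (- 2) * (int (4*q+2) * (int (4*q+2) - 1) - int (4*q+1) * (int (4*q+1) - 1))"
    by (rule part_sum) (use q in \<open>simp_all add: X_def cc_def plO5_def\<close>)
  have "2 * sum X {0..<4*q+2} = 0"
    unfolding s1 s2 s3 s4 s5 s6 s7 using p0 p1 p2 p3 p4 p5 p6 p7 by (simp add: algebra_simps)
  then have Z: "sum X {0..<4*q+2} = 0" by simp
  have "(\<Sum>i<2*(2*q+1). X i) = 0" using Z by (simp add: lessThan_atLeast0)
  then show ?thesis by (simp add: X_def)
qed

lemma O5_col2: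
  assumes q: "q \<ge> 1"
  shows "(\<Sum>i<2*(2*q+1). cc (2*q+1) i (plO5 q i ! 2)) = 0"
proof -
  define X where "X i = cc (2*q+1) i (plO5 q i ! 2)" for i
  have s1: "sum X {0..<4*q+2} = sum X {0..<1} + sum X {1..<4*q+2}"
    by (rule sumsplit) (use q in simp_all)
  have s2: "sum X {1..<4*q+2} = sum X {1..<2} + sum X {2..<4*q+2}"
    by (rule sumsplit) (use q in simp_all)
  have s3: "sum X {2..<4*q+2} = sum X {2..<q+1} + sum X {q+1..<4*q+2}"
    by (rule sumsplit) (use q in simp_all)
  have s4: "sum X {q+1..<4*q+2} = sum X {q+1..<2*q+1} + sum X {2*q+1..<4*q+2}"
    by (rule sumsplit) (use q in simp_all)
  have s5: "sum X {2*q+1..<4*q+2} = sum X {2*q+1..<3*q+1} + sum X {3*q+1..<4*q+2}"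
    by (rule sumsplit) (use q in simp_all)
  have s6: "sum X {3*q+1..<4*q+2} = sum X {3*q+1..<4*q} + sum X {4*q..<4*q+2}"
    by (rule sumsplit) (use q in simp_all)
  have s7: "sum X {4*q..<4*q+2} = sum X {4*q..<4*q+1} + sum X {4*q+1..<4*q+2}"
    by (rule sumsplit) (use q in simp_all)
  have p0: "2 * sum X {0..<1} = 2 * (int (1) - int (0)) * (5 * (int (2*q+1))) + (- 1) * (int (1) * (int (1) - 1) - int (0) * (int (0) - 1))"
    by (rule part_sum) (use q in \<open>simp_all add: X_def cc_def plO5_def\<close>)
  have p1: "2 * sum X {1..<2} = 2 * (int (2) - int (1)) * (- 5 * (int (2*q+1))) + (1) * (int (2) * (int (2) - 1) - int (1) * (int (1) - 1))"
    by (rule part_sum) (use q in \<open>simp_all add: X_def cc_def plO5_def\<close>)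
  have p2: "2 * sum X {2..<q+1} = 2 * (int (q+1) - int (2)) * (1) + (1) * (int (q+1) * (int (q+1) - 1) - int (2) * (int (2) - 1))"
    by (rule part_sum) (use q in \<open>simp_all add: X_def cc_def plO5_def\<close>)
  have p3: "2 * sum X {q+1..<2*q+1} = 2 * (int (2*q+1) - int (q+1)) * (1) + (1) * (int (2*q+1) * (int (2*q+1) - 1) - int (q+1) * (int (q+1) - 1))"
    by (rule part_sum) (use q in \<open>simp_all add: X_def cc_def plO5_def\<close>)
  have p4: "2 * sum X {2*q+1..<3*q+1} = 2 * (int (3*q+1) - int (2*q+1)) * (- 2 * (int (2*q+1))) + (1) * (int (3*q+1) * (int (3*q+1) - 1) - int (2*q+1) * (int (2*q+1) - 1))"
    by (rule part_sum) (use q in \<open>simp_all add: X_def cc_def plO5_def\<close>)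
  have p5: "2 * sum X {3*q+1..<4*q} = 2 * (int (4*q) - int (3*q+1)) * (- 2 * (int (2*q+1))) + (1) * (int (4*q) * (int (4*q) - 1) - int (3*q+1) * (int (3*q+1) - 1))"
    by (rule part_sum) (use q in \<open>simp_all add: X_def cc_def plO5_def\<close>)
  have p6: "2 * sum X {4*q..<4*q+1} = 2 * (int (4*q+1) - int (4*q)) * (- 5 * (int (2*q+1))) + (1) * (int (4*q+1) * (int (4*q+1) - 1) - int (4*q) * (int (4*q) - 1))"
    by (rule part_sum) (use q in \<open>simp_all add: X_def cc_def plO5_def\<close>)
  have p7: "2 * sum X {4*q+1..<4*q+2} = 2 * (int (4*q+2) - int (4*q+1)) * (5 * (int (2*q+1))) + (- 1) * (int (4*q+2) * (int (4*q+2) - 1) - int (4*q+1) * (int (4*q+1) - 1))"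
    by (rule part_sum) (use q in \<open>simp_all add: X_def cc_def plO5_def\<close>)
  have "2 * sum X {0..<4*q+2} = 0"
    unfolding s1 s2 s3 s4 s5 s6 s7 using p0 p1 p2 p3 p4 p5 p6 p7 by (simp add: algebra_simps)
  then have Z: "sum X {0..<4*q+2} = 0" by simp
  have "(\<Sum>i<2*(2*q+1). X i) = 0" using Z by (simp add: lessThan_atLeast0)
  then show ?thesis by (simp add: X_def)
qed

lemma O5_col3:
  assumes q: "q \<ge> 1"
  shows "(\<Sum>i<2*(2*q+1). cc (2*q+1) i (plO5 q i ! 3)) = 0"
proof -
  define X where "X i = cc (2*q+1) i (plO5 q i ! 3)" for i
  have s1: "sum X {0..<4*q+2} = sum X {0..<1} + sum X {1..<4*q+2}"
    by (rule sumsplit) (use q in simp_all)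
  have s2: "sum X {1..<4*q+2} = sum X {1..<2} + sum X {2..<4*q+2}"
    by (rule sumsplit) (use q in simp_all)
  have s3: "sum X {2..<4*q+2} = sum X {2..<q+1} + sum X {q+1..<4*q+2}"
    by (rule sumsplit) (use q in simp_all)
  have s4: "sum X {q+1..<4*q+2} = sum X {q+1..<2*q+1} + sum X {2*q+1..<4*q+2}"
    by (rule sumsplit) (use q in simp_all)
  have s5: "sum X {2*q+1..<4*q+2} = sum X {2*q+1..<3*q+1} + sum X {3*q+1..<4*q+2}"
    by (rule sumsplit) (use q in simp_all)
  have s6: "sum X {3*q+1..<4*q+2} = sum X {3*q+1..<4*q} + sum X {4*q..<4*q+2}"
    by (rule sumsplit) (use q in simp_all)
  have s7: "sum X {4*q..<4*q+2} = sum X {4*q..<4*q+1} + sum X {4*q+1..<4*q+2}"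
    by (rule sumsplit) (use q in simp_all)
  have p0: "2 * sum X {0..<1} = 2 * (int (1) - int (0)) * (3 * (int (2*q+1)) - 1) + (- 2) * (int (1) * (int (1) - 1) - int (0) * (int (0) - 1))"
    by (rule part_sum) (use q in \<open>simp_all add: X_def cc_def plO5_def\<close>)
  have p1: "2 * sum X {1..<2} = 2 * (int (2) - int (1)) * (5 * (int (2*q+1))) + (- 1) * (int (2) * (int (2) - 1) - int (1) * (int (1) - 1))"
    by (rule part_sum) (use q in \<open>simp_all add: X_def cc_def plO5_def\<close>)
  have p2: "2 * sum X {2..<q+1} = 2 * (int (q+1) - int (2)) * (5 * (int (2*q+1))) + (- 1) * (int (q+1) * (int (q+1) - 1) - int (2) * (int (2) - 1))"
    by (rule part_sum) (use q in \<open>simp_all add: X_def cc_def plO5_def\<close>)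
  have p3: "2 * sum X {q+1..<2*q+1} = 2 * (int (2*q+1) - int (q+1)) * (- 5 * (int (2*q+1))) + (1) * (int (2*q+1) * (int (2*q+1) - 1) - int (q+1) * (int (q+1) - 1))"
    by (rule part_sum) (use q in \<open>simp_all add: X_def cc_def plO5_def\<close>)
  have p4: "2 * sum X {2*q+1..<3*q+1} = 2 * (int (3*q+1) - int (2*q+1)) * (- 5 * (int (2*q+1))) + (1) * (int (3*q+1) * (int (3*q+1) - 1) - int (2*q+1) * (int (2*q+1) - 1))"
    by (rule part_sum) (use q in \<open>simp_all add: X_def cc_def plO5_def\<close>)
  have p5: "2 * sum X {3*q+1..<4*q} = 2 * (int (4*q) - int (3*q+1)) * (5 * (int (2*q+1))) + (- 1) * (int (4*q) * (int (4*q) - 1) - int (3*q+1) * (int (3*q+1) - 1))"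
    by (rule part_sum) (use q in \<open>simp_all add: X_def cc_def plO5_def\<close>)
  have p6: "2 * sum X {4*q..<4*q+1} = 2 * (int (4*q+1) - int (4*q)) * (5 * (int (2*q+1))) + (- 2) * (int (4*q+1) * (int (4*q+1) - 1) - int (4*q) * (int (4*q) - 1))"
    by (rule part_sum) (use q in \<open>simp_all add: X_def cc_def plO5_def\<close>)
  have p7: "2 * sum X {4*q+1..<4*q+2} = 2 * (int (4*q+2) - int (4*q+1)) * (- 3 * (int (2*q+1))) + (1) * (int (4*q+2) * (int (4*q+2) - 1) - int (4*q+1) * (int (4*q+1) - 1))"
    by (rule part_sum) (use q in \<open>simp_all add: X_def cc_def plO5_def\<close>)
  have "2 * sum X {0..<4*q+2} = 0"
    unfolding s1 s2 s3 s4 s5 s6 s7 using p0 p1 p2 p3 p4 p5 p6 p7 by (simp add: algebra_simps)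
  then have Z: "sum X {0..<4*q+2} = 0" by simp
  have "(\<Sum>i<2*(2*q+1). X i) = 0" using Z by (simp add: lessThan_atLeast0)
  then show ?thesis by (simp add: X_def)
qed

lemma O5_col4:
  assumes q: "q \<ge> 1"
  shows "(\<Sum>i<2*(2*q+1). cc (2*q+1) i (plO5 q i ! 4)) = 0"
proof -
  define X where "X i = cc (2*q+1) i (plO5 q i ! 4)" for i
  have s1: "sum X {0..<4*q+2} = sum X {0..<1} + sum X {1..<4*q+2}"
    by (rule sumsplit) (use q in simp_all)
  have s2: "sum X {1..<4*q+2} = sum X {1..<2} + sum X {2..<4*q+2}"
    by (rule sumsplit) (use q in simp_all)
  have s3: "sum X {2..<4*q+2} = sum X {2..<q+1} + sum X {q+1..<4*q+2}"
    by (rule sumsplit) (use q in simp_all)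
  have s4: "sum X {q+1..<4*q+2} = sum X {q+1..<2*q+1} + sum X {2*q+1..<4*q+2}"
    by (rule sumsplit) (use q in simp_all)
  have s5: "sum X {2*q+1..<4*q+2} = sum X {2*q+1..<3*q+1} + sum X {3*q+1..<4*q+2}"
    by (rule sumsplit) (use q in simp_all)
  have s6: "sum X {3*q+1..<4*q+2} = sum X {3*q+1..<4*q} + sum X {4*q..<4*q+2}"
    by (rule sumsplit) (use q in simp_all)
  have s7: "sum X {4*q..<4*q+2} = sum X {4*q..<4*q+1} + sum X {4*q+1..<4*q+2}"
    by (rule sumsplit) (use q in simp_all)
  have p0: "2 * sum X {0..<1} = 2 * (int (1) - int (0)) * (- 5 * (int (2*q+1))) + (1) * (int (1) * (int (1) - 1) - int (0) * (int (0) - 1))"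
    by (rule part_sum) (use q in \<open>simp_all add: X_def cc_def plO5_def\<close>)
  have p1: "2 * sum X {1..<2} = 2 * (int (2) - int (1)) * (1) + (1) * (int (2) * (int (2) - 1) - int (1) * (int (1) - 1))"
    by (rule part_sum) (use q in \<open>simp_all add: X_def cc_def plO5_def\<close>)
  have p2: "2 * sum X {2..<q+1} = 2 * (int (q+1) - int (2)) * (- 5 * (int (2*q+1))) + (1) * (int (q+1) * (int (q+1) - 1) - int (2) * (int (2) - 1))"
    by (rule part_sum) (use q in \<open>simp_all add: X_def cc_def plO5_def\<close>)
  have p3: "2 * sum X {q+1..<2*q+1} = 2 * (int (2*q+1) - int (q+1)) * (5 * (int (2*q+1))) + (- 1) * (int (2*q+1) * (int (2*q+1) - 1) - int (q+1) * (int (q+1) - 1))"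
    by (rule part_sum) (use q in \<open>simp_all add: X_def cc_def plO5_def\<close>)
  have p4: "2 * sum X {2*q+1..<3*q+1} = 2 * (int (3*q+1) - int (2*q+1)) * (5 * (int (2*q+1))) + (- 1) * (int (3*q+1) * (int (3*q+1) - 1) - int (2*q+1) * (int (2*q+1) - 1))"
    by (rule part_sum) (use q in \<open>simp_all add: X_def cc_def plO5_def\<close>)
  have p5: "2 * sum X {3*q+1..<4*q} = 2 * (int (4*q) - int (3*q+1)) * (- 5 * (int (2*q+1))) + (1) * (int (4*q) * (int (4*q) - 1) - int (3*q+1) * (int (3*q+1) - 1))"
    by (rule part_sum) (use q in \<open>simp_all add: X_def cc_def plO5_def\<close>)
  have p6: "2 * sum X {4*q..<4*q+1} = 2 * (int (4*q+1) - int (4*q)) * (- 2 * (int (2*q+1))) + (1) * (int (4*q+1) * (int (4*q+1) - 1) - int (4*q) * (int (4*q) - 1))"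
    by (rule part_sum) (use q in \<open>simp_all add: X_def cc_def plO5_def\<close>)
  have p7: "2 * sum X {4*q+1..<4*q+2} = 2 * (int (4*q+2) - int (4*q+1)) * (- 5 * (int (2*q+1))) + (1) * (int (4*q+2) * (int (4*q+2) - 1) - int (4*q+1) * (int (4*q+1) - 1))"
    by (rule part_sum) (use q in \<open>simp_all add: X_def cc_def plO5_def\<close>)
  have "2 * sum X {0..<4*q+2} = 0"
    unfolding s1 s2 s3 s4 s5 s6 s7 using p0 p1 p2 p3 p4 p5 p6 p7 by (simp add: algebra_simps)
  then have Z: "sum X {0..<4*q+2} = 0" by simp
  have "(\<Sum>i<2*(2*q+1). X i) = 0" using Z by (simp add: lessThan_atLeast0)
  then show ?thesis by (simp add: X_def)
qed


lemma cc_SV3: "i < 2*p \<Longrightarrow> s < 3 \<Longrightarrow> cc p i s \<in> SV (3*p)"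
  by (auto simp: cc_def SV_def less_Suc_eq numeral_3_eq_3)

lemma cc_SV5: "i < 2*p \<Longrightarrow> s < 5 \<Longrightarrow> cc p i s \<in> SV (5*p)"
proof -
  assume a: "i < 2*p" "s < 5"
  then have "s = 0 \<or> s = 1 \<or> s = 2 \<or> s = 3 \<or> s = 4" by auto
  then show ?thesis using a by (auto simp: cc_def SV_def)
qed

lemma cc_row3: "(\<Sum>s<3. cc p i s) = 0"
  by (simp add: cc_def numeral_3_eq_3)

lemma cc_row5: "(\<Sum>s<5. cc p i s) = 0"
  by (simp add: cc_def eval_nat_numeral)

lemma cc_inj3: "inj_on (\<lambda>(i,q). cc p i q) ({..<2*p} \<times> {..<3})"
  by (rule inj_on_subset[OF cc_inj]) auto

lemma j3: "(j::nat) < 3 \<Longrightarrow> j = 0 \<or> j = 1 \<or> j = 2" by auto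
lemma j5: "(j::nat) < 5 \<Longrightarrow> j = 0 \<or> j = 1 \<or> j = 2 \<or> j = 3 \<or> j = 4" by auto

lemma E3_isma:
  assumes q: "q \<ge> 1"
  shows "isma (2*(2*q)) 3 (\<lambda>i j. cc (2*q) i (plE3 q i ! j))"
proof (rule content_isma[where L="3*(2*q)"])
  show "2 * (2 * q) * 3 = 2 * (3 * (2 * q))" by simp
  show "inj_on (\<lambda>(i, qa). cc (2 * q) i qa) ({..<2 * (2 * q)} \<times> {..<3})" by (rule cc_inj3)
  show "\<And>i qa. i < 2 * (2 * q) \<Longrightarrow> qa < 3 \<Longrightarrow> cc (2 * q) i qa \<in> SV (3 * (2 * q))" by (rule cc_SV3)
  show "\<And>i. i < 2 * (2 * q) \<Longrightarrow> bij_betw (\<lambda>j. plE3 q i ! j) {..<3} {..<3}" by (rule plE3_bij)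
  show "\<And>i. i < 2 * (2 * q) \<Longrightarrow> (\<Sum>qa<3. cc (2 * q) i qa) = 0" by (rule cc_row3)
  show "\<And>j. j < 3 \<Longrightarrow> (\<Sum>i<2 * (2 * q). cc (2 * q) i (plE3 q i ! j)) = 0"
    using E3_col0[OF q] E3_col1[OF q] E3_col2[OF q] j3 by blast
qed

lemma O3_isma:
  assumes q: "q \<ge> 1"
  shows "isma (2*(2*q+1)) 3 (\<lambda>i j. cc (2*q+1) i (plO3 q i ! j))"
proof (rule content_isma[where L="3*(2*q+1)"])
  show "2 * (2 * q + 1) * 3 = 2 * (3 * (2 * q + 1))" by simp
  show "inj_on (\<lambda>(i, qa). cc (2 * q + 1) i qa) ({..<2 * (2 * q + 1)} \<times> {..<3})" by (rule cc_inj3)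
  show "\<And>i qa. i < 2 * (2 * q + 1) \<Longrightarrow> qa < 3 \<Longrightarrow> cc (2 * q + 1) i qa \<in> SV (3 * (2 * q + 1))" by (rule cc_SV3)
  show "\<And>i. i < 2 * (2 * q + 1) \<Longrightarrow> bij_betw (\<lambda>j. plO3 q i ! j) {..<3} {..<3}" by (rule plO3_bij)
  show "\<And>i. i < 2 * (2 * q + 1) \<Longrightarrow> (\<Sum>qa<3. cc (2 * q + 1) i qa) = 0" by (rule cc_row3)
  show "\<And>j. j < 3 \<Longrightarrow> (\<Sum>i<2 * (2 * q + 1). cc (2 * q + 1) i (plO3 q i ! j)) = 0"
    using O3_col0[OF q] O3_col1[OF q] O3_col2[OF q] j3 by blast
qed

lemma O5_isma:
  assumes q: "q \<ge> 1"
  shows "isma (2*(2*q+1)) 5 (\<lambda>i j. cc (2*q+1) i (plO5 q i ! j))"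
proof (rule content_isma[where L="5*(2*q+1)"])
  show "2 * (2 * q + 1) * 5 = 2 * (5 * (2 * q + 1))" by simp
  show "inj_on (\<lambda>(i, qa). cc (2 * q + 1) i qa) ({..<2 * (2 * q + 1)} \<times> {..<5})" by (rule cc_inj)
  show "\<And>i qa. i < 2 * (2 * q + 1) \<Longrightarrow> qa < 5 \<Longrightarrow> cc (2 * q + 1) i qa \<in> SV (5 * (2 * q + 1))" by (rule cc_SV5)
  show "\<And>i. i < 2 * (2 * q + 1) \<Longrightarrow> bij_betw (\<lambda>j. plO5 q i ! j) {..<5} {..<5}" by (rule plO5_bij)
  show "\<And>i. i < 2 * (2 * q + 1) \<Longrightarrow> (\<Sum>qa<5. cc (2 * q + 1) i qa) = 0" by (rule cc_row5)
  show "\<And>j. j < 5 \<Longrightarrow> (\<Sum>i<2 * (2 * q + 1). cc (2 * q + 1) i (plO5 q i ! j)) = 0"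
    using O5_col0[OF q] O5_col1[OF q] O5_col2[OF q] O5_col3[OF q] O5_col4[OF q] j5 by blast
qed


lemma isma_empty_rows: "isma 0 n B"
  by (simp add: isma_def SV_def bij_betw_def)

lemma bal_empty_rows: "bal 0 n B"
  by (simp add: bal_def)

lemma isma_empty_cols: "isma m 0 B"
  by (simp add: isma_def SV_def bij_betw_def)

lemma bal_empty_cols: "bal m 0 B"
  by (simp add: bal_def)

lemma vcat_isma:
  assumes "isma m1 n A" "isma m2 n B" "bal m2 n B"
  shows "isma (m1+m2) n (tr (hcat m1 (tr A) (shift (n*m1 div 2) (tr B))))"
proof -
  have "isma n (m1+m2) (hcat m1 (tr A) (shift (n*m1 div 2) (tr B)))"
    using hcat_isma[OF tr_isma[OF assms(1)] tr_isma[OF assms(2)] tr_bal[OF assms(3)]] .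
  then show ?thesis by (rule tr_isma)
qed

lemma vcat_bal:
  assumes "bal m1 n A" "bal m2 n B"
  shows "bal (m1+m2) n (tr (hcat m1 (tr A) (shift L (tr B))))"
  using tr_bal[OF hcat_bal[OF tr_bal[OF assms(1)] tr_bal[OF assms(2)]]] .

lemma hcat_ex:
  assumes "isma m n1 A" "isma m n2 B" "bal m n2 B"
  shows "\<exists>C. isma m (n1+n2) C"
  using hcat_isma[OF assms] by blast

lemma hcat_ex_bal:
  assumes "isma m n1 A" "bal m n1 A" "isma m n2 B" "bal m n2 B"
  shows "\<exists>C. isma m (n1+n2) C \<and> bal m (n1+n2) C"
  using hcat_isma[OF assms(1,3,4)] hcat_bal[OF assms(2,4)] by blast

lemma vcat_ex:
  assumes "isma m1 n A" "isma m2 n B" "bal m2 n B"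
  shows "\<exists>C. isma (m1+m2) n C"
  using vcat_isma[OF assms] by blast

lemma vcat_ex_bal:
  assumes "isma m1 n A" "bal m1 n A" "isma m2 n B" "bal m2 n B"
  shows "\<exists>C. isma (m1+m2) n C \<and> bal (m1+m2) n C"
  using vcat_isma[OF assms(1,3,4)] vcat_bal[OF assms(2,4)] by blast

definition R4 :: "nat \<Rightarrow> nat \<Rightarrow> int" where
  "R4 i j = (if i = 0 then 1 else -1) * ([1, -2, -3, 4] ! j)"

lemma R4_isma: "isma 2 4 R4"
proof (rule content_isma[where L=4 and \<pi>="\<lambda>i j. j", simplified])
  have L: "List.product [0..<2] [0..<4] = [(0,0),(0,1),(0,2),(0,3),(1,0),(1,1),(1,2),(1,3)]"
    by (simp add: upt_rec)
  have "distinct (map (\<lambda>(i,q). R4 i q) (List.product [0..<2] [0..<4]))"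
    unfolding L by (simp add: R4_def)
  moreover have "set (List.product [0..<2] [0..<4]) = {..<2} \<times> {..<4}" by auto
  ultimately show "inj_on (\<lambda>(i,q). R4 i q) ({..<2} \<times> {..<4})"
    by (simp add: distinct_map)
  show "\<And>i q. i < 2 \<Longrightarrow> q < 4 \<Longrightarrow> R4 i q \<in> SV 4"
    by (auto simp: R4_def SV_def less_Suc_eq numeral_2_eq_2 eval_nat_numeral)
  show "\<And>i. i < 2 \<Longrightarrow> (\<Sum>q<4. R4 i q) = 0"
    by (auto simp: R4_def less_Suc_eq eval_nat_numeral)
  show "\<And>j. j < 4 \<Longrightarrow> (\<Sum>i<2. R4 i j) = 0"
    by (auto simp: R4_def less_Suc_eq eval_nat_numeral)
  show "2 * 4 = (8::nat)" by simp
  show "\<And>i. i < 2 \<Longrightarrow> bij_betw (\<lambda>j. j) {..<4} {..<(4::nat)}" by (simp add: bij_betw_def)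
qed

lemma R4_bal: "bal 2 4 R4"
  by (auto simp: bal_def R4_def less_Suc_eq eval_nat_numeral)

lemma H4_ex: "\<exists>B. isma (2*k) 4 B \<and> bal (2*k) 4 B"
proof (induction k)
  case 0 then show ?case using isma_empty_rows bal_empty_rows by auto
next
  case (Suc k)
  then obtain B where "isma (2*k) 4 B" "bal (2*k) 4 B" by blast
  from vcat_ex_bal[OF this R4_isma R4_bal] show ?case by (simp add: add.commute)
qed

lemma H2_ex: "\<exists>B. isma (4*k) 2 B \<and> bal (4*k) 2 B"
proof (induction k)
  case 0 then show ?case using isma_empty_rows bal_empty_rows by auto
next
  case (Suc k)
  then obtain B where "isma (4*k) 2 B" "bal (4*k) 2 B" by blast
  from vcat_ex_bal[OF this tr_isma[OF R4_isma] tr_bal[OF R4_bal]] show ?case by (simp add: add.commute)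
qed

lemma Bal_4n: "\<exists>B. isma (2*k) (4*t) B \<and> bal (2*k) (4*t) B"
proof (induction t)
  case 0 then show ?case using isma_empty_cols bal_empty_cols by auto
next
  case (Suc t)
  then obtain B where B: "isma (2*k) (4*t) B" "bal (2*k) (4*t) B" by blast
  obtain C where C: "isma (2*k) 4 C" "bal (2*k) 4 C" using H4_ex by blast
  from hcat_ex_bal[OF B C] show ?case by (simp add: add.commute)
qed

lemma Bal_4m: "\<exists>B. isma (4*k) (2*t) B \<and> bal (4*k) (2*t) B"
proof (induction t)
  case 0 then show ?case using isma_empty_cols bal_empty_cols by auto
next
  case (Suc t)
  then obtain B where B: "isma (4*k) (2*t) B" "bal (4*k) (2*t) B" by blast
  obtain C where C: "isma (4*k) 2 C" "bal (4*k) 2 C" using H2_ex by blast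
  from hcat_ex_bal[OF B C] show ?case by (simp add: add.commute)
qed

lemma Bal_ex:
  assumes "even m" "even n" "4 dvd m \<or> 4 dvd n"
  shows "\<exists>B. isma m n B \<and> bal m n B"
  using assms Bal_4n Bal_4m by (auto elim!: evenE dvdE)


definition S66 :: "nat \<Rightarrow> nat \<Rightarrow> int" where
  "S66 i j = [[13, -16, -10, 15, -3, 1], [4, -9, 2, -6, 16, -7], [-15, -11, 14, 6, -4, 10],
     [-5, 18, -18, -12, 12, 5], [17, 7, 3, -2, -8, -17], [-14, 11, 9, -1, -13, 8]] ! i ! j"

lemma S66_isma: "isma 6 6 S66"
proof (rule content_isma[where L=18 and \<pi>="\<lambda>i j. j", simplified])
  have L: "List.product [0..<6] [0..<6] = [(0,0),(0,1),(0,2),(0,3),(0,4),(0,5),(1,0),(1,1),(1,2),(1,3),(1,4),(1,5),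
     (2,0),(2,1),(2,2),(2,3),(2,4),(2,5),(3,0),(3,1),(3,2),(3,3),(3,4),(3,5),(4,0),(4,1),(4,2),(4,3),(4,4),(4,5),
     (5,0),(5,1),(5,2),(5,3),(5,4),(5,5)]"
    by (simp add: upt_rec)
  have "distinct (map (\<lambda>(i,q). S66 i q) (List.product [0..<6] [0..<6]))"
    unfolding L by (simp add: S66_def)
  moreover have "set (List.product [0..<6] [0..<6]) = {..<6} \<times> {..<6}" by auto
  ultimately show "inj_on (\<lambda>(i,q). S66 i q) ({..<6} \<times> {..<6})"
    by (simp add: distinct_map)
  show "\<And>i q. i < 6 \<Longrightarrow> q < 6 \<Longrightarrow> S66 i q \<in> SV 18"
    by (auto simp: S66_def SV_def less_Suc_eq eval_nat_numeral)
  show "\<And>i. i < 6 \<Longrightarrow> (\<Sum>q<6. S66 i q) = 0"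
    by (auto simp: S66_def less_Suc_eq eval_nat_numeral)
  show "\<And>j. j < 6 \<Longrightarrow> (\<Sum>i<6. S66 i j) = 0"
    by (auto simp: S66_def less_Suc_eq eval_nat_numeral)
  show "6 * 6 = (36::nat)" by simp
  show "\<And>i. i < 6 \<Longrightarrow> bij_betw (\<lambda>j. j) {..<6} {..<(6::nat)}" by (simp add: bij_betw_def)
qed

lemma caseA:
  assumes "even m" "even n" "4 dvd m \<or> 4 dvd n \<or> (m \<ge> 6 \<and> n \<ge> 6)"
  shows "\<exists>B. isma m n B"
proof (cases "4 dvd m \<or> 4 dvd n")
  case True then show ?thesis using Bal_ex assms by blast
next
  case False
  then have m6: "m \<ge> 6" "n \<ge> 6" using assms by auto
  have "m = 6 + 4*((m - 6) div 4)" using False assms(1) m6 by presburger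
  then obtain a where a: "m = 6 + 4*a" by blast
  have "n = 6 + 4*((n - 6) div 4)" using False assms(2) m6 by presburger
  then obtain b where b: "n = 6 + 4*b" by blast
  obtain C where C: "isma 6 (4*b) C" "bal 6 (4*b) C" using Bal_ex[of 6 "4*b"] by auto
  obtain D where D: "isma 6 (6 + 4*b) D" using hcat_ex[OF S66_isma C] by blast
  obtain E where E: "isma (4*a) (6+4*b) E" "bal (4*a) (6+4*b) E" using Bal_ex[of "4*a" "6+4*b"] by auto
  obtain F where "isma (6 + 4*a) (6+4*b) F" using vcat_ex[OF D E] by blast
  then show ?thesis using a b by blast
qed

lemma base3:
  assumes "even m" "m \<ge> 4"
  shows "\<exists>B. isma m 3 B"
proof (cases "4 dvd m")
  case True
  then have "m = 2*(2*(m div 4))" by presburger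
  then obtain q where "m = 2*(2*q)" by blast
  moreover have "q \<ge> 1" using assms calculation by simp
  ultimately show ?thesis using E3_isma by blast
next
  case False
  have q: "m = 2*(2*(m div 4)+1)" using False assms(1) by presburger
  then obtain q where q: "m = 2*(2*q+1)" by blast
  moreover have "q \<ge> 1" using assms q by simp
  ultimately show ?thesis using O3_isma by blast
qed

lemma base5:
  assumes "even m" "m \<ge> 4"
  shows "\<exists>B. isma m 5 B"
proof (cases "4 dvd m")
  case True
  then have "m = 2*(2*(m div 4))" by presburger
  then obtain q where q: "m = 2*(2*q)" by blast
  moreover have q1: "q \<ge> 1" using assms q by simp
  obtain A where A: "isma m 3 A" using E3_isma[OF q1] q by blast
  obtain C where C: "isma m 2 C" "bal m 2 C" using Bal_ex[of m 2] True assms by auto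
  show ?thesis using hcat_ex[OF A C] by simp
next
  case False
  have q: "m = 2*(2*(m div 4)+1)" using False assms(1) by presburger
  then obtain q where q: "m = 2*(2*q+1)" by blast
  moreover have "q \<ge> 1" using assms q by simp
  ultimately show ?thesis using O5_isma by blast
qed

lemma caseB:
  assumes "even m" "m \<ge> 4" "odd n" "n \<ge> 3"
  shows "\<exists>B. isma m n B"
proof -
  consider (c3) k where "n = 3 + 4*k" | (c5) k where "n = 5 + 4*k"
  proof -
    have "n mod 4 = 1 \<or> n mod 4 = 3" using assms(3) by presburger
    then show ?thesis
    proof
      assume "n mod 4 = 3"
      then have "n = 3 + 4*(n div 4)" by presburger
      then show ?thesis using that(1) by blast
    next
      assume h: "n mod 4 = 1"
      then have "n = 5 + 4*(n div 4 - 1)" using assms(4) by presburger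
      then show ?thesis using that(2) by blast
    qed
  qed
  then show ?thesis
  proof cases
    case (c3 k)
    obtain A where A: "isma m 3 A" using base3 assms by blast
    obtain C where C: "isma m (4*k) C" "bal m (4*k) C" using Bal_ex[of m "4*k"] assms by auto
    show ?thesis using hcat_ex[OF A C] c3 by simp
  next
    case (c5 k)
    obtain A where A: "isma m 5 A" using base5 assms by blast
    obtain C where C: "isma m (4*k) C" "bal m (4*k) C" using Bal_ex[of m "4*k"] assms by auto
    show ?thesis using hcat_ex[OF A C] c5 by simp
  qed
qed


lemma inj_card_bij:
  assumes "finite Y" "inj_on f X" "f ` X \<subseteq> Y" "card X = card Y"
  shows "bij_betw f X Y"
proof -
  have "card (f ` X) = card Y" using card_image[OF assms(2)] assms(4) by simp
  then have "f ` X = Y" using assms(1,3) by (intro card_subset_eq) auto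
  then show ?thesis using assms(2) by (simp add: bij_betw_def)
qed

lemma two_row_msma:
  fixes w :: "nat \<Rightarrow> int"
  assumes ab: "\<And>j. j < n \<Longrightarrow> w j = int (j+1) \<or> w j = - int (j+1)"
    and s: "(\<Sum>j<n. w j) mod (2 * int n + 1) = 0"
  shows "msma 2 n (\<lambda>i j. (if i = 0 then 1 else -1) * w j)"
proof -
  let ?T = "\<lambda>(i::nat) (j::nat). (if i = 0 then 1 else -1) * w j"
  have absT: "\<bar>?T i j\<bar> = int (j+1)" if "j < n" for i j
    using ab[OF that] by auto
  have inj: "inj_on (\<lambda>(i,j). ?T i j) ({..<2} \<times> {..<n})"
  proof (rule inj_onI)
    fix x y assume x: "x \<in> {..<2} \<times> {..<n}" and y: "y \<in> {..<2} \<times> {..<n}"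
      and e0: "(\<lambda>(i,j). ?T i j) x = (\<lambda>(i,j). ?T i j) y"
    obtain i j where xij: "x = (i,j)" by (cases x)
    obtain i' j' where yij: "y = (i',j')" by (cases y)
    have a: "i < 2" "j < n" "i' < 2" "j' < n" using x y xij yij by auto
    have e: "?T i j = ?T i' j'" using e0 xij yij by simp
    have "int (j+1) = int (j'+1)" using absT[OF a(2), of i] absT[OF a(4), of i'] e by simp
    then have jj: "j = j'" by simp
    have "w j \<noteq> 0" using ab[OF a(2)] by auto
    then have "i = i'" using e jj a by (cases i; cases i') auto
    then show "x = y" using jj xij yij by simp
  qed
  have img: "(\<lambda>(i,j). ?T i j) ` ({..<2} \<times> {..<n}) \<subseteq> SV n"
  proof clarify
    fix i j :: nat assume "i < 2" "j < n"
    then show "?T i j \<in> SV n" using ab[of j] by (auto simp: SV_def)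
  qed
  have bij: "bij_betw (\<lambda>(i,j). ?T i j) ({..<2} \<times> {..<n}) (SV (2*n div 2))"
    using inj_card_bij[OF finite_SV inj img] by (simp add: card_SV card_cartesian_product)
  have rows: "\<forall>i<2. (\<Sum>j<n. ?T i j) mod (int (2*n) + 1) = 0"
  proof (intro allI impI)
    fix i :: nat assume "i < 2"
    have "(\<Sum>j<n. ?T i j) = (if i = 0 then 1 else -1) * (\<Sum>j<n. w j)"
      by (simp add: sum_distrib_left)
    moreover have "(- (\<Sum>j<n. w j)) mod (2 * int n + 1) = 0" using s by (simp add: zmod_zminus1_eq_if)
    ultimately show "(\<Sum>j<n. ?T i j) mod (int (2*n) + 1) = 0" using s by auto
  qed
  have cols: "\<forall>j<n. (\<Sum>i<2. ?T i j) mod (int (2*n) + 1) = 0"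
    by (simp add: numeral_2_eq_2)
  show ?thesis unfolding msma_def using bij rows cols by simp
qed

definition bs :: "nat \<Rightarrow> int" where
  "bs r = (if r mod 4 = 0 \<or> r mod 4 = 3 then 1 else -1)"

lemma bs_abs: "bs r = 1 \<or> bs r = -1" by (simp add: bs_def)

lemma bs_mul: "bs r * x = x \<or> bs r * x = - (x::int)"
  using bs_abs[of r] by auto

lemma sum4: fixes a :: nat shows "sum f {a..<a+4} = f a + f (a+1) + f (a+2) + (f (a+3) :: int)"
  by (simp add: numeral_eq_Suc add.assoc)

lemma bs_facts:
  "bs (4*t) = 1" "bs (Suc (4*t)) = -1" "bs (Suc (Suc (4*t))) = -1" "bs (Suc (Suc (Suc (4*t)))) = 1"
proof -
  have m0: "(4*t) mod 4 = 0" and m1: "(Suc (4*t)) mod 4 = 1" and m2: "(Suc (Suc (4*t))) mod 4 = 2"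
    and m3: "(Suc (Suc (Suc (4*t)))) mod 4 = 3" by presburger+
  show "bs (4*t) = 1" "bs (Suc (4*t)) = -1" "bs (Suc (Suc (4*t))) = -1" "bs (Suc (Suc (Suc (4*t)))) = 1"
    unfolding bs_def using m0 m1 m2 m3 by simp_all
qed

lemma block_sum0: "(\<Sum>r<4*t. bs r * (int r + c)) = 0"
proof (induction t)
  case 0 then show ?case by simp
next
  case (Suc t)
  have e: "4 * Suc t = Suc (Suc (Suc (Suc (4*t))))" by simp
  show ?case unfolding e sum.lessThan_Suc bs_facts Suc.IH by (simp add: algebra_simps)
qed

lemma block_sum: "(\<Sum>j\<in>{a..<a+4*t}. bs (j - a) * int (j+1)) = 0"
proof -
  have "(\<Sum>j\<in>{a..<a+4*t}. bs (j - a) * int (j+1)) = (\<Sum>r\<in>{0..<4*t}. bs (r + a - a) * int (r + a + 1))"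
    using sum.shift_bounds_nat_ivl[of "\<lambda>j. bs (j - a) * int (j+1)" 0 a "4*t"] by (simp add: add.commute)
  also have "\<dots> = (\<Sum>r<4*t. bs r * (int r + int (a + 1)))"
    by (simp add: lessThan_atLeast0 algebra_simps)
  also have "\<dots> = 0" by (rule block_sum0)
  finally show ?thesis .
qed

lemma T2_0: "\<exists>B. msma 2 (4*t) B"
proof -
  have "msma 2 (4*t) (\<lambda>i j. (if i = 0 then 1 else -1) * (bs j * int (j+1)))"
  proof (rule two_row_msma)
    show "\<And>j. j < 4*t \<Longrightarrow> bs j * int (j+1) = int (j+1) \<or> bs j * int (j+1) = - int (j+1)"
      using bs_mul by blast
    have "(\<Sum>j<4*t. bs j * int (j+1)) = 0" using block_sum[of 0 t] by (simp add: lessThan_atLeast0)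
    then show "(\<Sum>j<4*t. bs j * int (j+1)) mod (2 * int (4*t) + 1) = 0" by simp
  qed
  then show ?thesis by blast
qed

definition w3 :: "nat \<Rightarrow> int" where
  "w3 j = (if j = 0 then 1 else if j = 1 then 2 else if j = 2 then -3 else bs (j - 3) * int (j+1))"

lemma T2_3: "\<exists>B. msma 2 (4*t+3) B"
proof -
  have "msma 2 (4*t+3) (\<lambda>i j. (if i = 0 then 1 else -1) * w3 j)"
  proof (rule two_row_msma)
    show "w3 j = int (j+1) \<or> w3 j = - int (j+1)" if "j < 4*t+3" for j
      using bs_mul[of "j - 3" "int (j+1)"] by (auto simp: w3_def)
    have "sum w3 {0..<3+4*t} = sum w3 {0..<3} + sum w3 {3..<3+4*t}"
      by (rule sumsplit) auto
    also have "sum w3 {0..<3} = 0" by (simp add: w3_def numeral_3_eq_3)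
    also have "sum w3 {3..<3+4*t} = (\<Sum>j\<in>{3..<3+4*t}. bs (j - 3) * int (j+1))"
      by (rule sum.cong) (auto simp: w3_def)
    also have "\<dots> = 0" by (rule block_sum)
    finally have "(\<Sum>j<4*t+3. w3 j) = 0" by (simp add: lessThan_atLeast0 add.commute)
    then show "(\<Sum>j<4*t+3. w3 j) mod (2 * int (4*t+3) + 1) = 0" by simp
  qed
  then show ?thesis by blast
qed

definition w1 :: "nat \<Rightarrow> nat \<Rightarrow> int" where
  "w1 t j = (if j = 0 then 1 else if j < 4*t+1 then bs (j - 1) * int (j+1)
      else if j = 4*t+1 then - int (j+1) else int (j+1))"

lemma T2_1: "\<exists>B. msma 2 (4*t+5) B"
proof -
  have "msma 2 (4*t+5) (\<lambda>i j. (if i = 0 then 1 else -1) * w1 t j)"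
  proof (rule two_row_msma)
    show "w1 t j = int (j+1) \<or> w1 t j = - int (j+1)" if "j < 4*t+5" for j
      using bs_mul[of "j - 1" "int (j+1)"] by (auto simp: w1_def)
    have "sum (w1 t) {0..<(1+4*t)+4} = sum (w1 t) {0..<1} + sum (w1 t) {1..<(1+4*t)+4}"
      by (rule sumsplit) auto
    also have "sum (w1 t) {1..<(1+4*t)+4} = sum (w1 t) {1..<1+4*t} + sum (w1 t) {1+4*t..<(1+4*t)+4}"
      by (rule sumsplit) auto
    also have "sum (w1 t) {1..<1+4*t} = (\<Sum>j\<in>{1..<1+4*t}. bs (j - 1) * int (j+1))"
      by (rule sum.cong) (auto simp: w1_def)
    also have "\<dots> = 0" by (rule block_sum)
    also have "sum (w1 t) {1+4*t..<(1+4*t)+4} = 8 * int t + 10"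
      unfolding sum4 by (simp add: w1_def)
    also have "sum (w1 t) {0..<1} = 1" by (simp add: w1_def)
    finally have "(\<Sum>j<4*t+5. w1 t j) = 2 * int (4*t+5) + 1" by (simp add: lessThan_atLeast0 add.commute)
    then show "(\<Sum>j<4*t+5. w1 t j) mod (2 * int (4*t+5) + 1) = 0" by simp
  qed
  then show ?thesis by blast
qed

definition w2 :: "nat \<Rightarrow> nat \<Rightarrow> int" where
  "w2 t j = (if j = 0 then -1 else if j = 1 then 2 else if j < 4*t+2 then bs (j - 2) * int (j+1)
      else if j = 4*t+2 then - int (j+1) else int (j+1))"

lemma T2_2: "\<exists>B. msma 2 (4*t+6) B"
proof -
  have "msma 2 (4*t+6) (\<lambda>i j. (if i = 0 then 1 else -1) * w2 t j)"
  proof (rule two_row_msma)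
    show "w2 t j = int (j+1) \<or> w2 t j = - int (j+1)" if "j < 4*t+6" for j
      using bs_mul[of "j - 2" "int (j+1)"] by (auto simp: w2_def)
    have "sum (w2 t) {0..<(2+4*t)+4} = sum (w2 t) {0..<2} + sum (w2 t) {2..<(2+4*t)+4}"
      by (rule sumsplit) auto
    also have "sum (w2 t) {2..<(2+4*t)+4} = sum (w2 t) {2..<2+4*t} + sum (w2 t) {2+4*t..<(2+4*t)+4}"
      by (rule sumsplit) auto
    also have "sum (w2 t) {2..<2+4*t} = (\<Sum>j\<in>{2..<2+4*t}. bs (j - 2) * int (j+1))"
      by (rule sum.cong) (auto simp: w2_def)
    also have "\<dots> = 0" by (rule block_sum)
    also have "sum (w2 t) {2+4*t..<(2+4*t)+4} = 8 * int t + 12"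
      unfolding sum4 by (simp add: w2_def)
    also have "sum (w2 t) {0..<2} = 1" by (simp add: w2_def numeral_2_eq_2)
    finally have "(\<Sum>j<4*t+6. w2 t j) = 2 * int (4*t+6) + 1" by (simp add: lessThan_atLeast0 add.commute)
    then show "(\<Sum>j<4*t+6. w2 t j) mod (2 * int (4*t+6) + 1) = 0" by simp
  qed
  then show ?thesis by blast
qed

lemma T2_ex:
  assumes "n \<ge> 3"
  shows "\<exists>B. msma 2 n B"
proof -
  have "n mod 4 = 0 \<or> n mod 4 = 1 \<or> n mod 4 = 2 \<or> n mod 4 = 3" by presburger
  then show ?thesis
  proof (elim disjE)
    assume "n mod 4 = 0"
    then have "n = 4*(n div 4)" by presburger
    then show ?thesis using T2_0 by metis
  next
    assume "n mod 4 = 1"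
    then have "n = 4*((n - 5) div 4) + 5" using assms by presburger
    then show ?thesis using T2_1 by metis
  next
    assume "n mod 4 = 2"
    then have "n = 4*((n - 6) div 4) + 6" using assms by presburger
    then show ?thesis using T2_2 by metis
  next
    assume "n mod 4 = 3"
    then have "n = 4*(n div 4) + 3" by presburger
    then show ?thesis using T2_3 by metis
  qed
qed


lemma exists_msma:
  assumes m: "m \<ge> 2" and n: "n \<ge> 2" and ev: "even (m*n)" and gt: "m*n > 4"
  shows "\<exists>B. msma m n B"
proof (cases "m = 2")
  case True
  then have "n \<ge> 3" using gt by (cases "n = 2") auto
  then show ?thesis using T2_ex True by blast
next
  case m2: False
  show ?thesis
  proof (cases "n = 2")
    case True
    then have "m \<ge> 3" using m m2 by auto
    then obtain B where "msma 2 m B" using T2_ex by blast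
    then have "msma m 2 (tr B)" by (rule tr_msma)
    then show ?thesis using True by blast
  next
    case n2: False
    have m3: "m \<ge> 3" and n3: "n \<ge> 3" using m n m2 n2 by auto
    show ?thesis
    proof (cases "even m")
      case em: True
      show ?thesis
      proof (cases "even n")
        case en: True
        have "4 dvd m \<or> 4 dvd n \<or> (m \<ge> 6 \<and> n \<ge> 6)" using em en m3 n3 by presburger
        then obtain B where "isma m n B" using caseA em en by blast
        then show ?thesis using isma_msma by blast
      next
        case on: False
        have "m \<ge> 4" using em m3 by presburger
        then obtain B where "isma m n B" using caseB em on n3 by blast
        then show ?thesis using isma_msma by blast
      qed
    next
      case om: False
      then have en: "even n" using ev by simp
      have "n \<ge> 4" using en n3 by presburger
      then obtain B where "isma n m B" using caseB en om m3 by blast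
      then have "isma m n (tr B)" by (rule tr_isma)
      then show ?thesis using isma_msma by blast
    qed
  qed
qed

theorem mainTheorem15:
  fixes m n :: nat
  assumes "m \<ge> 2" and "n \<ge> 2"
  shows "(\<exists>A. zero_sum_magic_pfa (m * n + 1) (Zstar (m * n + 1)) m n n m A)
         \<longleftrightarrow> (odd (m * n + 1) \<and> m * n + 1 > 5)"
proof
  assume "\<exists>A. zero_sum_magic_pfa (m * n + 1) (Zstar (m * n + 1)) m n n m A"
  then obtain A where "zero_sum_magic_pfa (m * n + 1) (Zstar (m * n + 1)) m n n m A" by blast
  then show "odd (m * n + 1) \<and> m * n + 1 > 5" using necessity assms by blast
next
  assume h: "odd (m * n + 1) \<and> m * n + 1 > 5"
  then have "even (m*n)" "m*n > 4" by auto
  then obtain B where "msma m n B" using exists_msma assms by blast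
  then show "\<exists>A. zero_sum_magic_pfa (m * n + 1) (Zstar (m * n + 1)) m n n m A" by (rule msma_pfa)
qed


end
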